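(* In the two-unicast setting, suppose $k_{1-2}+k_{2-1}\ge\min(k_{12-1},k_{12-2})$ and $k_{1-2}\le k_{1-1}$. Set $R_1^*=k_{1-2}$ and $R_2^*=\min(k_{12-1},k_{12-2})-k_{1-2}$. Let the field $GF(q)$ and the local coding coefficients at the non-source nodes be fixed so that $\mathrm{rank}(H_{ij})=k_{j-i}$ and $\mathrm{rank}([H_{i1}~H_{i2}])=k_{12-i}$ for $i,j\in\{1,2\}$, and let $M_1$ ($k_{1-12}\times R_1^*$) and $M_2$ ($k_{2-12}\times R_2^*$) be full column rank source encoding matrices such that $[H_{i1}M_1~~H_{i2}M_2]$ has full column rank $R_1^*+R_2^*$ for $i=1,2$ (i.e., both terminals can decode both sources at rates $(R_1^*,R_2^* )$). Then every pair of nonnegative integers $(R_1,R_2)$ with $$R_1\le k_{1-1},\qquad R_2\le \min(k_{12-1},k_{12-2})-k_{1-2},\qquad R_1+R_2\le \mathrm{rank}([H_{11}~~H_{12}M_2])$$ is achievable.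
   Context: $G=(V,E)$ is a directed acyclic network with unit-capacity edges (each carrying one symbol of $GF(q)$ per use), sources $s_1,s_2$ (no incoming edges), terminals $t_1,t_2$ (no outgoing edges); $t_i$ wants the message of $s_i$. $k_{N_1-N_2}$ is the min-cut from $\{s_i:i\in N_1\}$ to $\{t_j:j\in N_2\}$. W.l.o.g. $s_i$ has exactly $k_{i-12}$ outgoing edges and $t_i$ has exactly $k_{12-i}$ incoming edges. For a linear network code over $GF(q)$ with fixed local coefficients at non-source nodes, $H_{ij}$ is the $k_{12-i}\times k_{j-12}$ matrix such that the vector of symbols on the incoming edges of $t_i$ equals $H_{i1}Y_1+H_{i2}Y_2$, where $Y_j$ is the vector of symbols on the outgoing edges of $s_j$; the source encoding is $Y_j=M_jU_j$ with $U_j$ the message vector of $s_j$. $(R_1,R_2)$ is achievable if for some finite field $GF(q)$ there is a linear network code such that, when $s_i$ observes $R_i$ independent symbols of $GF(q)$, $t_1$ uniquely recovers $s_1$'s message and $t_2$ uniquely recovers $s_2$'s message. *)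

theory Defs
  imports "HOL-Algebra.Ring"
begin

definition In_edges :: "'e set \<Rightarrow> ('e \<Rightarrow> 'v) \<Rightarrow> 'v \<Rightarrow> 'e set" where
  "In_edges E head v = {e \<in> E. head e = v}"

definition Out_edges :: "'e set \<Rightarrow> ('e \<Rightarrow> 'v) \<Rightarrow> 'v \<Rightarrow> 'e set" where
  "Out_edges E tail v = {e \<in> E. tail e = v}"

definition is_path :: "'e set \<Rightarrow> ('e \<Rightarrow> 'v) \<Rightarrow> ('e \<Rightarrow> 'v) \<Rightarrow> 'v \<Rightarrow> 'v \<Rightarrow> 'e list \<Rightarrow> bool" where
  "is_path E tail head u w p \<longleftrightarrow>
     p \<noteq> [] \<and> set p \<subseteq> E \<and> tail (p ! 0) = u \<and> head (last p) = w \<and>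
     (\<forall>i. Suc i < length p \<longrightarrow> head (p ! i) = tail (p ! Suc i))"

definition acyclic_net :: "'e set \<Rightarrow> ('e \<Rightarrow> 'v) \<Rightarrow> ('e \<Rightarrow> 'v) \<Rightarrow> bool" where
  "acyclic_net E tail head \<longleftrightarrow> (\<forall>v p. \<not> is_path E tail head v v p)"

definition separates :: "'e set \<Rightarrow> ('e \<Rightarrow> 'v) \<Rightarrow> ('e \<Rightarrow> 'v) \<Rightarrow> 'e set \<Rightarrow> 'v set \<Rightarrow> 'v set \<Rightarrow> bool" where
  "separates E tail head C S T \<longleftrightarrow>
     (\<forall>s\<in>S. \<forall>t\<in>T. \<forall>p. is_path E tail head s t p \<longrightarrow> set p \<inter> C \<noteq> {})"

text \<open>min-cut k_{N1-N2} (unit capacity edges): least number of edges whose removal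
  disconnects the sources S from the terminals T.\<close>
definition min_cut :: "'e set \<Rightarrow> ('e \<Rightarrow> 'v) \<Rightarrow> ('e \<Rightarrow> 'v) \<Rightarrow> 'v set \<Rightarrow> 'v set \<Rightarrow> nat" where
  "min_cut E tail head S T = (LEAST n. \<exists>C. C \<subseteq> E \<and> card C = n \<and> separates E tail head C S T)"

definition two_unicast_net ::
  "'v set \<Rightarrow> 'e set \<Rightarrow> ('e \<Rightarrow> 'v) \<Rightarrow> ('e \<Rightarrow> 'v) \<Rightarrow> 'v \<Rightarrow> 'v \<Rightarrow> 'v \<Rightarrow> 'v \<Rightarrow> bool" where
  "two_unicast_net V E tail head s1 s2 t1 t2 \<longleftrightarrow>
     finite V \<and> finite E \<and> (\<forall>e\<in>E. tail e \<in> V \<and> head e \<in> V) \<and> acyclic_net E tail head \<and>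
     s1 \<in> V \<and> s2 \<in> V \<and> t1 \<in> V \<and> t2 \<in> V \<and> s1 \<noteq> s2 \<and> t1 \<noteq> t2 \<and>
     In_edges E head s1 = {} \<and> In_edges E head s2 = {} \<and>
     Out_edges E tail t1 = {} \<and> Out_edges E tail t2 = {}"

text \<open>x is the assignment of symbols to edges induced by the source symbols Y (on the
  outgoing edges of the sources) and the local coding coefficients beta at non-source nodes:
  beta e' e is the coefficient of incoming edge e' in outgoing edge e.\<close>
definition net_flow ::
  "('a, 'm) ring_scheme \<Rightarrow> 'e set \<Rightarrow> ('e \<Rightarrow> 'v) \<Rightarrow> ('e \<Rightarrow> 'v) \<Rightarrow> 'v set \<Rightarrow>
   ('e \<Rightarrow> 'e \<Rightarrow> 'a) \<Rightarrow> ('e \<Rightarrow> 'a) \<Rightarrow> ('e \<Rightarrow> 'a) \<Rightarrow> bool" where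
  "net_flow K E tail head srcs beta Y x \<longleftrightarrow>
     (\<forall>e\<in>E. x e = (if tail e \<in> srcs then Y e
                   else finsum K (\<lambda>e'. beta e' e \<otimes>\<^bsub>K\<^esub> x e') (In_edges E head (tail e))))"

text \<open>Matrices are functions indexed by a row set and a column set.\<close>
definition mat_mult :: "('a, 'm) ring_scheme \<Rightarrow> ('r \<Rightarrow> 'j \<Rightarrow> 'a) \<Rightarrow> 'j set \<Rightarrow> ('j \<Rightarrow> 'c \<Rightarrow> 'a) \<Rightarrow> 'r \<Rightarrow> 'c \<Rightarrow> 'a" where
  "mat_mult K A J B = (\<lambda>r c. finsum K (\<lambda>j. A r j \<otimes>\<^bsub>K\<^esub> B j c) J)"

definition mat_concat :: "('r \<Rightarrow> 'c \<Rightarrow> 'a) \<Rightarrow> ('r \<Rightarrow> 'd \<Rightarrow> 'a) \<Rightarrow> 'r \<Rightarrow> 'c + 'd \<Rightarrow> 'a" where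
  "mat_concat A B = (\<lambda>r c. case c of Inl a \<Rightarrow> A r a | Inr b \<Rightarrow> B r b)"

definition cols_indep :: "('a, 'm) ring_scheme \<Rightarrow> 'r set \<Rightarrow> ('r \<Rightarrow> 'c \<Rightarrow> 'a) \<Rightarrow> 'c set \<Rightarrow> bool" where
  "cols_indep K Rw A S \<longleftrightarrow>
     (\<forall>c. c \<in> S \<rightarrow> carrier K \<longrightarrow>
          (\<forall>r\<in>Rw. finsum K (\<lambda>j. c j \<otimes>\<^bsub>K\<^esub> A r j) S = \<zero>\<^bsub>K\<^esub>) \<longrightarrow> (\<forall>j\<in>S. c j = \<zero>\<^bsub>K\<^esub>))"

definition mat_rank :: "('a, 'm) ring_scheme \<Rightarrow> 'r set \<Rightarrow> 'c set \<Rightarrow> ('r \<Rightarrow> 'c \<Rightarrow> 'a) \<Rightarrow> nat" where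
  "mat_rank K Rw C A = Max (card ` {S. S \<subseteq> C \<and> cols_indep K Rw A S})"

definition src_symbols ::
  "('a, 'm) ring_scheme \<Rightarrow> ('e \<Rightarrow> 'v) \<Rightarrow> 'v \<Rightarrow> 'v \<Rightarrow> nat \<Rightarrow> nat \<Rightarrow>
   ('e \<Rightarrow> nat \<Rightarrow> 'a) \<Rightarrow> ('e \<Rightarrow> nat \<Rightarrow> 'a) \<Rightarrow> (nat \<Rightarrow> 'a) \<Rightarrow> (nat \<Rightarrow> 'a) \<Rightarrow> 'e \<Rightarrow> 'a" where
  "src_symbols K tail s1 s2 R1 R2 M1 M2 U1 U2 =
     (\<lambda>e. if tail e = s1 then finsum K (\<lambda>r. M1 e r \<otimes>\<^bsub>K\<^esub> U1 r) {..<R1}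
          else if tail e = s2 then finsum K (\<lambda>r. M2 e r \<otimes>\<^bsub>K\<^esub> U2 r) {..<R2}
          else \<zero>\<^bsub>K\<^esub>)"

text \<open>(R1,R2) is achievable: for some finite field (represented, up to isomorphism, as a
  HOL-Algebra field with carrier a set of naturals) there is a linear network code
  (local coefficients beta, source encoding matrices M1, M2) such that the symbols received
  by t_i determine the message of s_i.\<close>
definition achievable ::
  "'e set \<Rightarrow> ('e \<Rightarrow> 'v) \<Rightarrow> ('e \<Rightarrow> 'v) \<Rightarrow> 'v \<Rightarrow> 'v \<Rightarrow> 'v \<Rightarrow> 'v \<Rightarrow> nat \<Rightarrow> nat \<Rightarrow> bool" where
  "achievable E tail head s1 s2 t1 t2 R1 R2 \<longleftrightarrow>
     (\<exists>K :: nat ring. field K \<and> finite (carrier K) \<and>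
       (\<exists>beta M1 M2.
          (\<forall>e e'. beta e e' \<in> carrier K) \<and> (\<forall>e r. M1 e r \<in> carrier K) \<and> (\<forall>e r. M2 e r \<in> carrier K) \<and>
          (\<forall>U1 U2 U1' U2' x x'.
             U1 \<in> {..<R1} \<rightarrow> carrier K \<longrightarrow> U2 \<in> {..<R2} \<rightarrow> carrier K \<longrightarrow>
             U1' \<in> {..<R1} \<rightarrow> carrier K \<longrightarrow> U2' \<in> {..<R2} \<rightarrow> carrier K \<longrightarrow>
             net_flow K E tail head {s1, s2} beta (src_symbols K tail s1 s2 R1 R2 M1 M2 U1 U2) x \<longrightarrow>
             net_flow K E tail head {s1, s2} beta (src_symbols K tail s1 s2 R1 R2 M1 M2 U1' U2') x' \<longrightarrow>
             ((\<forall>e\<in>In_edges E head t1. x e = x' e) \<longrightarrow> (\<forall>r<R1. U1 r = U1' r)) \<and>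
             ((\<forall>e\<in>In_edges E head t2. x e = x' e) \<longrightarrow> (\<forall>r<R2. U2 r = U2' r)))))"

end

theory Submission
  imports Defs "HOL-Library.FuncSet" "HOL-Algebra.QuotRing"
begin

no_notation set_add (infixl \<open><+>\<index>\<close> 60)



definition cmat :: "('a, 'm) ring_scheme \<Rightarrow> ('r \<Rightarrow> 'c \<Rightarrow> 'a) \<Rightarrow> bool" where
  "cmat K A \<longleftrightarrow> (\<forall>r c. A r c \<in> carrier K)"

definition inspan :: "('a, 'm) ring_scheme \<Rightarrow> 'r set \<Rightarrow> ('r \<Rightarrow> 'c \<Rightarrow> 'a) \<Rightarrow> 'c set \<Rightarrow> ('r \<Rightarrow> 'a) \<Rightarrow> bool" where
  "inspan K T A Y w \<longleftrightarrow> (\<exists>a \<in> Y \<rightarrow> carrier K. \<forall>r\<in>T. w r = finsum K (\<lambda>y. a y \<otimes>\<^bsub>K\<^esub> A r y) Y)"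

context field
begin

lemma finsum_Plus:
  assumes "finite A" "finite B" "f \<in> (A <+> B) \<rightarrow> carrier R"
  shows "finsum R f (A <+> B) = finsum R (\<lambda>a. f (Inl a)) A \<oplus> finsum R (\<lambda>b. f (Inr b)) B"
proof -
  have "finsum R f (A <+> B) = finsum R f (Inl ` A) \<oplus> finsum R f (Inr ` B)"
    unfolding Plus_def using assms by (intro finsum_Un_disjoint) (auto simp: Plus_def)
  also have "finsum R f (Inl ` A) = finsum R (\<lambda>a. f (Inl a)) A"
    using assms by (intro finsum_reindex) (auto simp: Plus_def)
  also have "finsum R f (Inr ` B) = finsum R (\<lambda>b. f (Inr b)) B"
    using assms by (intro finsum_reindex) (auto simp: Plus_def)
  finally show ?thesis .
qed

lemma finsum_swap:
  assumes "finite A" "finite B" "\<And>a b. a \<in> A \<Longrightarrow> b \<in> B \<Longrightarrow> f a b \<in> carrier R"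
  shows "finsum R (\<lambda>a. finsum R (\<lambda>b. f a b) B) A = finsum R (\<lambda>b. finsum R (\<lambda>a. f a b) A) B"
  using assms
proof (induct A rule: finite_induct)
  case empty then show ?case by (simp add: finsum_zero)
next
  case (insert x F)
  have "finsum R (\<lambda>a. finsum R (\<lambda>b. f a b) B) (insert x F)
      = finsum R (\<lambda>b. f x b) B \<oplus> finsum R (\<lambda>a. finsum R (\<lambda>b. f a b) B) F"
    using insert by (intro finsum_insert) (auto intro!: finsum_closed)
  also have "\<dots> = finsum R (\<lambda>b. f x b) B \<oplus> finsum R (\<lambda>b. finsum R (\<lambda>a. f a b) F) B"
    using insert by simp
  also have "\<dots> = finsum R (\<lambda>b. f x b \<oplus> finsum R (\<lambda>a. f a b) F) B"
    using insert by (intro finsum_addf[symmetric]) (auto intro!: finsum_closed)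
  also have "\<dots> = finsum R (\<lambda>b. finsum R (\<lambda>a. f a b) (insert x F)) B"
    using insert by (intro finsum_cong') (auto intro!: finsum_insert[symmetric])
  finally show ?case .
qed

lemma finsum_diff:
  assumes "finite A" "a \<in> A \<rightarrow> carrier R" "b \<in> A \<rightarrow> carrier R" "g \<in> A \<rightarrow> carrier R"
  shows "finsum R (\<lambda>i. a i \<otimes> g i) A \<ominus> finsum R (\<lambda>i. b i \<otimes> g i) A
       = finsum R (\<lambda>i. (a i \<ominus> b i) \<otimes> g i) A"
  using assms
proof (induct A rule: finite_induct)
  case empty then show ?case by (simp add: minus_eq r_neg)
next
  case (insert x F)
  let ?A = "finsum R (\<lambda>i. a i \<otimes> g i) F" and ?B = "finsum R (\<lambda>i. b i \<otimes> g i) F"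
  have c: "?A \<in> carrier R" "?B \<in> carrier R" using insert by (auto intro!: finsum_closed)
  have ax: "a x \<in> carrier R" "b x \<in> carrier R" "g x \<in> carrier R" using insert by auto
  have "finsum R (\<lambda>i. a i \<otimes> g i) (insert x F) \<ominus> finsum R (\<lambda>i. b i \<otimes> g i) (insert x F)
      = (a x \<otimes> g x \<oplus> ?A) \<ominus> (b x \<otimes> g x \<oplus> ?B)"
    using insert by (simp add: finsum_insert Pi_iff)
  also have "\<dots> = (a x \<ominus> b x) \<otimes> g x \<oplus> (?A \<ominus> ?B)"
    using c ax by (simp add: minus_eq l_distr minus_add l_minus a_ac)
  also have "?A \<ominus> ?B = finsum R (\<lambda>i. (a i \<ominus> b i) \<otimes> g i) F" using insert by auto
  also have "(a x \<ominus> b x) \<otimes> g x \<oplus> \<dots> = finsum R (\<lambda>i. (a i \<ominus> b i) \<otimes> g i) (insert x F)"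
    using insert by (subst finsum_insert) (auto simp: minus_eq Pi_iff)
  finally show ?case .
qed

lemma ind_empty: "cols_indep R T A {}"
  by (simp add: cols_indep_def)

lemma ind_subset:
  assumes ind: "cols_indep R T A S" and sub: "S' \<subseteq> S" and fin: "finite S" and cm: "cmat R A"
  shows "cols_indep R T A S'"
  unfolding cols_indep_def
proof (intro allI impI ballI)
  fix c j assume c: "c \<in> S' \<rightarrow> carrier R" and z: "\<forall>r\<in>T. finsum R (\<lambda>j. c j \<otimes> A r j) S' = \<zero>" and j: "j \<in> S'"
  let ?c = "\<lambda>j. if j \<in> S' then c j else \<zero>"
  have cc: "?c \<in> S \<rightarrow> carrier R" using c by auto
  have "\<forall>r\<in>T. finsum R (\<lambda>j. ?c j \<otimes> A r j) S = \<zero>"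
  proof
    fix r assume r: "r \<in> T"
    have "finsum R (\<lambda>j. c j \<otimes> A r j) S' = finsum R (\<lambda>j. ?c j \<otimes> A r j) S"
      using fin sub c cm by (intro add.finprod_mono_neutral_cong_left) (auto simp: cmat_def Pi_iff)
    then show "finsum R (\<lambda>j. ?c j \<otimes> A r j) S = \<zero>" using z r by simp
  qed
  with ind cc have "\<forall>j\<in>S. ?c j = \<zero>" unfolding cols_indep_def by blast
  then have "?c j = \<zero>" using j sub by blast
  then show "c j = \<zero>" using j by simp
qed

lemma finsum_Plus_empty_l:
  assumes "finite X" "f \<in> (X <+> ({}::'z set)) \<rightarrow> carrier R"
  shows "finsum R f (X <+> ({}::'z set)) = finsum R (\<lambda>a. f (Inl a)) X"
proof -
  have "(\<lambda>a. f (Inl a)) \<in> X \<rightarrow> carrier R" using assms by auto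
  then show ?thesis using finsum_Plus[of X "{}::'z set" f] assms by (simp add: finsum_closed)
qed

lemma finsum_Plus_empty_r:
  assumes "finite Y" "f \<in> (({}::'z set) <+> Y) \<rightarrow> carrier R"
  shows "finsum R f (({}::'z set) <+> Y) = finsum R (\<lambda>a. f (Inr a)) Y"
proof -
  have "(\<lambda>a. f (Inr a)) \<in> Y \<rightarrow> carrier R" using assms by auto
  then show ?thesis using finsum_Plus[of "{}::'z set" Y f] assms by (simp add: finsum_closed)
qed

lemma concat_sum_l:
  assumes "finite X" "cmat R A" "c \<in> (X <+> ({}::'d set)) \<rightarrow> carrier R"
  shows "finsum R (\<lambda>j. c j \<otimes> mat_concat A B r j) (X <+> ({}::'d set)) = finsum R (\<lambda>x. c (Inl x) \<otimes> A r x) X"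
proof -
  have "(\<lambda>j. c j \<otimes> mat_concat A B r j) \<in> (X <+> ({}::'d set)) \<rightarrow> carrier R"
    using assms by (auto simp: mat_concat_def cmat_def Pi_iff)
  from finsum_Plus_empty_l[OF assms(1) this] show ?thesis by (simp add: mat_concat_def)
qed

lemma concat_sum_r:
  assumes "finite Y" "cmat R B" "c \<in> (({}::'d set) <+> Y) \<rightarrow> carrier R"
  shows "finsum R (\<lambda>j. c j \<otimes> mat_concat A B r j) (({}::'d set) <+> Y) = finsum R (\<lambda>x. c (Inr x) \<otimes> B r x) Y"
proof -
  have "(\<lambda>j. c j \<otimes> mat_concat A B r j) \<in> (({}::'d set) <+> Y) \<rightarrow> carrier R"
    using assms by (auto simp: mat_concat_def cmat_def Pi_iff)
  from finsum_Plus_empty_r[OF assms(1) this] show ?thesis by (simp add: mat_concat_def)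
qed

lemma ind_Plus_l:
  assumes fin: "finite X" and cm: "cmat R A"
  shows "cols_indep R T (mat_concat A B) (X <+> ({}::'d set)) \<longleftrightarrow> cols_indep R T A X"
proof
  assume ind: "cols_indep R T (mat_concat A B) (X <+> ({}::'d set))"
  show "cols_indep R T A X" unfolding cols_indep_def
  proof (intro allI impI ballI)
    fix c j assume c: "c \<in> X \<rightarrow> carrier R" and z: "\<forall>r\<in>T. finsum R (\<lambda>j. c j \<otimes> A r j) X = \<zero>" and j: "j \<in> X"
    let ?c = "\<lambda>z. case z of Inl x \<Rightarrow> c x | Inr (y::'d) \<Rightarrow> \<zero>"
    have cc: "?c \<in> (X <+> ({}::'d set)) \<rightarrow> carrier R" using c by auto
    have "\<forall>r\<in>T. finsum R (\<lambda>j. ?c j \<otimes> mat_concat A B r j) (X <+> ({}::'d set)) = \<zero>"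
      using z cc cm fin by (simp add: concat_sum_l)
    with ind cc have "\<forall>j\<in>X <+> ({}::'d set). ?c j = \<zero>" unfolding cols_indep_def by blast
    then have "?c (Inl j) = \<zero>" using j by blast
    then show "c j = \<zero>" by simp
  qed
next
  assume ind: "cols_indep R T A X"
  show "cols_indep R T (mat_concat A B) (X <+> ({}::'d set))" unfolding cols_indep_def
  proof (intro allI impI ballI)
    fix c j assume c: "c \<in> (X <+> ({}::'d set)) \<rightarrow> carrier R" 
      and z: "\<forall>r\<in>T. finsum R (\<lambda>j. c j \<otimes> mat_concat A B r j) (X <+> ({}::'d set)) = \<zero>" 
      and j: "j \<in> X <+> ({}::'d set)"
    have cc: "(\<lambda>x. c (Inl x)) \<in> X \<rightarrow> carrier R" using c by auto
    have "\<forall>r\<in>T. finsum R (\<lambda>x. c (Inl x) \<otimes> A r x) X = \<zero>"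
      using z c cm fin by (simp add: concat_sum_l)
    with ind cc have "\<forall>x\<in>X. c (Inl x) = \<zero>" unfolding cols_indep_def by blast
    then show "c j = \<zero>" using j by auto
  qed
qed

lemma ind_Plus_r:
  assumes fin: "finite Y" and cm: "cmat R B"
  shows "cols_indep R T (mat_concat A B) (({}::'d set) <+> Y) \<longleftrightarrow> cols_indep R T B Y"
proof
  assume ind: "cols_indep R T (mat_concat A B) (({}::'d set) <+> Y)"
  show "cols_indep R T B Y" unfolding cols_indep_def
  proof (intro allI impI ballI)
    fix c j assume c: "c \<in> Y \<rightarrow> carrier R" and z: "\<forall>r\<in>T. finsum R (\<lambda>j. c j \<otimes> B r j) Y = \<zero>" and j: "j \<in> Y"
    let ?c = "\<lambda>z. case z of Inl (x::'d) \<Rightarrow> \<zero> | Inr y \<Rightarrow> c y"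
    have cc: "?c \<in> (({}::'d set) <+> Y) \<rightarrow> carrier R" using c by auto
    have "\<forall>r\<in>T. finsum R (\<lambda>j. ?c j \<otimes> mat_concat A B r j) (({}::'d set) <+> Y) = \<zero>"
      using z cc cm fin by (simp add: concat_sum_r)
    with ind cc have "\<forall>j\<in>({}::'d set) <+> Y. ?c j = \<zero>" unfolding cols_indep_def by blast
    then have "?c (Inr j) = \<zero>" using j by blast
    then show "c j = \<zero>" by simp
  qed
next
  assume ind: "cols_indep R T B Y"
  show "cols_indep R T (mat_concat A B) (({}::'d set) <+> Y)" unfolding cols_indep_def
  proof (intro allI impI ballI)
    fix c j assume c: "c \<in> (({}::'d set) <+> Y) \<rightarrow> carrier R" 
      and z: "\<forall>r\<in>T. finsum R (\<lambda>j. c j \<otimes> mat_concat A B r j) (({}::'d set) <+> Y) = \<zero>" 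
      and j: "j \<in> ({}::'d set) <+> Y"
    have cc: "(\<lambda>x. c (Inr x)) \<in> Y \<rightarrow> carrier R" using c by auto
    have "\<forall>r\<in>T. finsum R (\<lambda>x. c (Inr x) \<otimes> B r x) Y = \<zero>"
      using z c cm fin by (simp add: concat_sum_r)
    with ind cc have "\<forall>x\<in>Y. c (Inr x) = \<zero>" unfolding cols_indep_def by blast
    then show "c j = \<zero>" using j by auto
  qed
qed

lemma cmat_concat: "cmat R A \<Longrightarrow> cmat R B \<Longrightarrow> cmat R (mat_concat A B)"
  by (auto simp: cmat_def mat_concat_def split: sum.split)

lemma cmat_mult: "cmat R A \<Longrightarrow> cmat R B \<Longrightarrow> cmat R (mat_mult R A J B)"
  by (auto simp: cmat_def mat_mult_def intro!: finsum_closed)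

lemma inspan_col:
  assumes "c \<in> Y" "finite Y" "cmat R A"
  shows "inspan R T A Y (\<lambda>r. A r c)"
  unfolding inspan_def
proof (intro bexI ballI)
  fix r
  have "finsum R (\<lambda>y. (if y = c then \<one> else \<zero>) \<otimes> A r y) Y = finsum R (\<lambda>y. if c = y then A r y else \<zero>) Y"
    using assms by (intro finsum_cong') (auto simp: cmat_def)
  also have "\<dots> = A r c" using assms by (intro finsum_singleton) (auto simp: cmat_def)
  finally show "A r c = finsum R (\<lambda>y. (if y = c then \<one> else \<zero>) \<otimes> A r y) Y" by simp
qed auto

lemma inspan_mono:
  assumes "inspan R T A Y w" "Y \<subseteq> Y'" "finite Y'" "cmat R A"
  shows "inspan R T A Y' w"
proof -
  obtain a where a: "a \<in> Y \<rightarrow> carrier R" "\<forall>r\<in>T. w r = finsum R (\<lambda>y. a y \<otimes> A r y) Y"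
    using assms(1) unfolding inspan_def by blast
  let ?a = "\<lambda>y. if y \<in> Y then a y else \<zero>"
  show ?thesis unfolding inspan_def
  proof (intro bexI ballI)
    fix r assume r: "r \<in> T"
    have "finsum R (\<lambda>y. a y \<otimes> A r y) Y = finsum R (\<lambda>y. ?a y \<otimes> A r y) Y'"
      using assms a by (intro add.finprod_mono_neutral_cong_left) (auto simp: cmat_def Pi_iff)
    then show "w r = finsum R (\<lambda>y. ?a y \<otimes> A r y) Y'" using a r by simp
  qed (use a in auto)
qed

lemma inspan_Plus_l:
  assumes fin: "finite X" and cm: "cmat R A"
  shows "inspan R T (mat_concat A B) (X <+> ({}::'d set)) w \<longleftrightarrow> inspan R T A X w"
proof
  assume "inspan R T (mat_concat A B) (X <+> ({}::'d set)) w"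
  then obtain a where a: "a \<in> (X <+> ({}::'d set)) \<rightarrow> carrier R" 
    "\<forall>r\<in>T. w r = finsum R (\<lambda>y. a y \<otimes> mat_concat A B r y) (X <+> ({}::'d set))"
    unfolding inspan_def by blast
  show "inspan R T A X w" unfolding inspan_def
    apply (rule bexI[where x="\<lambda>x. a (Inl x)"])
    using a cm fin by (auto simp: concat_sum_l)
next
  assume "inspan R T A X w"
  then obtain a where a: "a \<in> X \<rightarrow> carrier R" "\<forall>r\<in>T. w r = finsum R (\<lambda>y. a y \<otimes> A r y) X"
    unfolding inspan_def by blast
  show "inspan R T (mat_concat A B) (X <+> ({}::'d set)) w" unfolding inspan_def
  proof (rule bexI[where x="\<lambda>z. case z of Inl x \<Rightarrow> a x | Inr y \<Rightarrow> \<zero>"])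
    show cc: "(\<lambda>z. case z of Inl x \<Rightarrow> a x | Inr y \<Rightarrow> \<zero>) \<in> (X <+> ({}::'d set)) \<rightarrow> carrier R" using a by auto
    show "\<forall>r\<in>T. w r = finsum R (\<lambda>y. (case y of Inl x \<Rightarrow> a x | Inr y \<Rightarrow> \<zero>) \<otimes> mat_concat A B r y) (X <+> ({}::'d set))"
      using a cm fin cc by (simp add: concat_sum_l)
  qed
qed

lemma inspan_Plus_r:
  assumes fin: "finite Y" and cm: "cmat R B"
  shows "inspan R T (mat_concat A B) (({}::'d set) <+> Y) w \<longleftrightarrow> inspan R T B Y w"
proof
  assume "inspan R T (mat_concat A B) (({}::'d set) <+> Y) w"
  then obtain a where a: "a \<in> (({}::'d set) <+> Y) \<rightarrow> carrier R" 
    "\<forall>r\<in>T. w r = finsum R (\<lambda>y. a y \<otimes> mat_concat A B r y) (({}::'d set) <+> Y)"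
    unfolding inspan_def by blast
  show "inspan R T B Y w" unfolding inspan_def
    apply (rule bexI[where x="\<lambda>x. a (Inr x)"])
    using a cm fin by (auto simp: concat_sum_r)
next
  assume "inspan R T B Y w"
  then obtain a where a: "a \<in> Y \<rightarrow> carrier R" "\<forall>r\<in>T. w r = finsum R (\<lambda>y. a y \<otimes> B r y) Y"
    unfolding inspan_def by blast
  show "inspan R T (mat_concat A B) (({}::'d set) <+> Y) w" unfolding inspan_def
  proof (rule bexI[where x="\<lambda>z. case z of Inl x \<Rightarrow> \<zero> | Inr y \<Rightarrow> a y"])
    show cc: "(\<lambda>z. case z of Inl x \<Rightarrow> \<zero> | Inr y \<Rightarrow> a y) \<in> (({}::'d set) <+> Y) \<rightarrow> carrier R" using a by auto
    show "\<forall>r\<in>T. w r = finsum R (\<lambda>y. (case y of Inl x \<Rightarrow> \<zero> | Inr y \<Rightarrow> a y) \<otimes> mat_concat A B r y) (({}::'d set) <+> Y)"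
      using a cm fin cc by (simp add: concat_sum_r)
  qed
qed


end



context field begin
lemma minus_zero_eq: "a \<in> carrier R \<Longrightarrow> b \<in> carrier R \<Longrightarrow> a \<ominus> b = \<zero> \<Longrightarrow> a = b"
  using add.inv_solve_right'[of \<zero> a b] by (simp add: minus_eq)

lemma inspan_lincomb:
  assumes finI: "finite I" and finY: "finite Y" and cmA: "cmat R A" and cmB: "cmat R B"
    and c: "c \<in> I \<rightarrow> carrier R" and sp: "\<forall>i\<in>I. inspan R T A Y (\<lambda>r. B r i)"
  shows "inspan R T A Y (\<lambda>r. finsum R (\<lambda>i. c i \<otimes> B r i) I)"
proof -
  from sp have "\<forall>i\<in>I. \<exists>a. a \<in> Y \<rightarrow> carrier R \<and> (\<forall>r\<in>T. B r i = finsum R (\<lambda>y. a y \<otimes> A r y) Y)"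
    unfolding inspan_def by blast
  from bchoice[OF this] obtain \<alpha> where \<alpha>: "\<forall>i\<in>I. \<alpha> i \<in> Y \<rightarrow> carrier R \<and> (\<forall>r\<in>T. B r i = finsum R (\<lambda>y. \<alpha> i y \<otimes> A r y) Y)"
    by blast
  define a where "a y = finsum R (\<lambda>i. c i \<otimes> \<alpha> i y) I" for y
  have ca: "a \<in> Y \<rightarrow> carrier R" using \<alpha> c unfolding a_def by (auto intro!: finsum_closed simp: Pi_iff)
  show ?thesis unfolding inspan_def
  proof (intro bexI[OF _ ca] ballI)
    fix r assume r: "r \<in> T"
    have "finsum R (\<lambda>i. c i \<otimes> B r i) I = finsum R (\<lambda>i. c i \<otimes> finsum R (\<lambda>y. \<alpha> i y \<otimes> A r y) Y) I"
      using \<alpha> r c cmB cmA by (intro finsum_cong') (auto simp: cmat_def Pi_iff intro!: finsum_closed)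
    also have "\<dots> = finsum R (\<lambda>i. finsum R (\<lambda>y. c i \<otimes> (\<alpha> i y \<otimes> A r y)) Y) I"
      using \<alpha> c cmA finY by (intro finsum_cong') (auto simp: cmat_def Pi_iff intro!: finsum_rdistr finsum_closed)
    also have "\<dots> = finsum R (\<lambda>y. finsum R (\<lambda>i. c i \<otimes> (\<alpha> i y \<otimes> A r y)) I) Y"
      using \<alpha> c cmA finY finI by (intro finsum_swap) (auto simp: cmat_def Pi_iff)
    also have "\<dots> = finsum R (\<lambda>y. a y \<otimes> A r y) Y"
    proof (intro finsum_cong')
      fix y assume y: "y \<in> Y"
      have "a y \<otimes> A r y = finsum R (\<lambda>i. c i \<otimes> \<alpha> i y \<otimes> A r y) I"
        unfolding a_def using \<alpha> c cmA finI y by (intro finsum_ldistr) (auto simp: cmat_def Pi_iff)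
      also have "\<dots> = finsum R (\<lambda>i. c i \<otimes> (\<alpha> i y \<otimes> A r y)) I"
        using \<alpha> c cmA y by (intro finsum_cong') (auto simp: cmat_def Pi_iff m_assoc)
      finally show "finsum R (\<lambda>i. c i \<otimes> (\<alpha> i y \<otimes> A r y)) I = a y \<otimes> A r y" by simp
    qed (use ca cmA in \<open>auto simp: cmat_def\<close>)
    finally show "finsum R (\<lambda>i. c i \<otimes> B r i) I = finsum R (\<lambda>y. a y \<otimes> A r y) Y" .
  qed
qed

lemma ind_insert_span:
  assumes fin: "finite S" and ind: "cols_indep R T A S" and cS: "c \<notin> S"
    and nind: "\<not> cols_indep R T A (insert c S)" and cm: "cmat R A"
  shows "inspan R T A S (\<lambda>r. A r c)"
proof -
  from nind obtain \<gamma> j0 where g: "\<gamma> \<in> insert c S \<rightarrow> carrier R"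
    and z: "\<forall>r\<in>T. finsum R (\<lambda>j. \<gamma> j \<otimes> A r j) (insert c S) = \<zero>"
    and j0: "j0 \<in> insert c S" "\<gamma> j0 \<noteq> \<zero>"
    unfolding cols_indep_def by blast
  have split: "finsum R (\<lambda>j. \<gamma> j \<otimes> A r j) (insert c S) = \<gamma> c \<otimes> A r c \<oplus> finsum R (\<lambda>j. \<gamma> j \<otimes> A r j) S" for r
    using fin cS g cm by (intro finsum_insert) (auto simp: cmat_def Pi_iff)
  have gc: "\<gamma> c \<noteq> \<zero>"
  proof
    assume "\<gamma> c = \<zero>"
    then have "\<forall>r\<in>T. finsum R (\<lambda>j. \<gamma> j \<otimes> A r j) S = \<zero>"
      using z split g cm fin by (auto simp: cmat_def Pi_iff finsum_closed)
    with ind g have "\<forall>j\<in>S. \<gamma> j = \<zero>" unfolding cols_indep_def by auto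
    with j0 \<open>\<gamma> c = \<zero>\<close> show False by auto
  qed
  have gcc: "\<gamma> c \<in> carrier R" using g by auto
  have gU: "\<gamma> c \<in> Units R" using gc gcc field_Units by auto
  define k where "k = \<ominus> (inv (\<gamma> c))"
  have kc: "k \<in> carrier R" unfolding k_def using gU by auto
  show ?thesis unfolding inspan_def
  proof (rule bexI[where x="\<lambda>j. k \<otimes> \<gamma> j"], intro ballI)
    fix r assume r: "r \<in> T"
    let ?s = "finsum R (\<lambda>j. \<gamma> j \<otimes> A r j) S"
    have sc: "?s \<in> carrier R" using g cm by (auto intro!: finsum_closed simp: cmat_def Pi_iff)
    have Ac: "A r c \<in> carrier R" using cm by (auto simp: cmat_def)
    have e: "\<gamma> c \<otimes> A r c \<oplus> ?s = \<zero>" using z r split by simp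
    have "finsum R (\<lambda>j. k \<otimes> \<gamma> j \<otimes> A r j) S = finsum R (\<lambda>j. k \<otimes> (\<gamma> j \<otimes> A r j)) S"
      using g cm kc by (intro finsum_cong') (auto simp: cmat_def Pi_iff m_assoc)
    also have "\<dots> = k \<otimes> ?s"
      using g cm kc fin by (intro finsum_rdistr[symmetric]) (auto simp: cmat_def Pi_iff)
    also have "?s = \<ominus> (\<gamma> c \<otimes> A r c)"
    proof -
      have "?s \<oplus> \<gamma> c \<otimes> A r c = \<zero>" using e sc gcc Ac by (simp add: a_comm)
      then show ?thesis using sc gcc Ac by (simp add: add.inv_equality)
    qed
    also have "k \<otimes> \<ominus> (\<gamma> c \<otimes> A r c) = inv (\<gamma> c) \<otimes> \<gamma> c \<otimes> A r c"
    proof -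
      have ic: "inv (\<gamma> c) \<in> carrier R" using gU by simp
      have "k \<otimes> \<ominus> (\<gamma> c \<otimes> A r c) = \<ominus> (\<ominus> (inv (\<gamma> c) \<otimes> (\<gamma> c \<otimes> A r c)))"
        unfolding k_def using ic gcc Ac by (simp add: l_minus r_minus)
      also have "\<dots> = inv (\<gamma> c) \<otimes> (\<gamma> c \<otimes> A r c)" using ic gcc Ac by simp
      finally show ?thesis using ic gcc Ac by (simp add: m_assoc)
    qed
    also have "\<dots> = A r c" using gU Ac by simp
    finally show "A r c = finsum R (\<lambda>j. k \<otimes> \<gamma> j \<otimes> A r j) S" by simp
  qed (use g kc in auto)
qed

lemma rank_ex:
  assumes "finite C"
  shows "\<exists>S\<subseteq>C. cols_indep R T A S \<and> card S = mat_rank R T C A"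
proof -
  let ?F = "{S. S \<subseteq> C \<and> cols_indep R T A S}"
  have "finite ?F" proof (rule finite_subset[of _ "Pow C"])
    show "?F \<subseteq> Pow C" by blast
  qed (use assms in simp)
  moreover have "{} \<in> ?F" by (simp add: ind_empty)
  ultimately have "Max (card ` ?F) \<in> card ` ?F" by (intro Max_in) auto
  then show ?thesis unfolding mat_rank_def by auto
qed

lemma rank_le:
  assumes "finite C" "S \<subseteq> C" "cols_indep R T A S"
  shows "card S \<le> mat_rank R T C A"
proof -
  let ?F = "{S. S \<subseteq> C \<and> cols_indep R T A S}"
  have "finite ?F" proof (rule finite_subset[of _ "Pow C"])
    show "?F \<subseteq> Pow C" by blast
  qed (use assms in simp)
  then show ?thesis unfolding mat_rank_def using assms by (intro Max_ge) auto
qed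

lemma rank_full:
  assumes "finite C" "mat_rank R T C A = card C"
  shows "cols_indep R T A C"
proof -
  obtain S where "S \<subseteq> C" "cols_indep R T A S" "card S = mat_rank R T C A" using rank_ex assms(1) by blast
  moreover then have "S = C" using assms card_subset_eq[of C S] by simp
  ultimately show ?thesis by simp
qed

lemma basis_exists:
  assumes fin: "finite C" and sub: "S0 \<subseteq> C" and ind: "cols_indep R T A S0" and cm: "cmat R A"
  shows "\<exists>B. S0 \<subseteq> B \<and> B \<subseteq> C \<and> cols_indep R T A B \<and> (\<forall>c\<in>C. inspan R T A B (\<lambda>r. A r c))"
proof -
  let ?F = "{B. S0 \<subseteq> B \<and> B \<subseteq> C \<and> cols_indep R T A B}"
  have fF: "finite ?F" proof (rule finite_subset[of _ "Pow C"])
    show "?F \<subseteq> Pow C" by blast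
  qed (use fin in simp)
  have "S0 \<in> ?F" using sub ind by auto
  then have "Max (card ` ?F) \<in> card ` ?F" using fF by (intro Max_in) auto
  then obtain B where B: "B \<in> ?F" "card B = Max (card ` ?F)" by auto
  have fB: "finite B" using B fin finite_subset by auto
  have "\<forall>c\<in>C. inspan R T A B (\<lambda>r. A r c)"
  proof
    fix c assume c: "c \<in> C"
    show "inspan R T A B (\<lambda>r. A r c)"
    proof (cases "c \<in> B")
      case True show ?thesis by (rule inspan_col[OF True fB cm])
    next
      case False
      have "\<not> cols_indep R T A (insert c B)"
      proof
        assume "cols_indep R T A (insert c B)"
        then have "insert c B \<in> ?F" using B c by auto
        then have "card (insert c B) \<le> Max (card ` ?F)" using fF by (intro Max_ge) auto
        then show False using B False fB by simp
      qed
      moreover have "cols_indep R T A B" using B by blast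
      ultimately show ?thesis using ind_insert_span[OF fB _ False _ cm] by blast
    qed
  qed
  then show ?thesis using B by blast
qed

end



context field begin

lemma steinitz:
  assumes finK: "finite (carrier R)" and finX: "finite X" and finY: "finite Y"
    and ind: "cols_indep R T B X" and sp: "\<forall>x\<in>X. inspan R T A Y (\<lambda>r. B r x)"
    and cmA: "cmat R A" and cmB: "cmat R B"
  shows "card X \<le> card Y"
proof -
  define \<Phi> where "\<Phi> c = restrict (\<lambda>r. finsum R (\<lambda>x. c x \<otimes> B r x) X) T" for c
  define \<Psi> where "\<Psi> a = restrict (\<lambda>r. finsum R (\<lambda>y. a y \<otimes> A r y) Y) T" for a
  let ?q = "card (carrier R)"
  have inj: "inj_on \<Phi> (X \<rightarrow>\<^sub>E carrier R)"
  proof (rule inj_onI)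
    fix c c' assume c: "c \<in> X \<rightarrow>\<^sub>E carrier R" and c': "c' \<in> X \<rightarrow>\<^sub>E carrier R" and e: "\<Phi> c = \<Phi> c'"
    have d: "(\<lambda>x. c x \<ominus> c' x) \<in> X \<rightarrow> carrier R" using c c' by auto
    have "\<forall>r\<in>T. finsum R (\<lambda>x. (c x \<ominus> c' x) \<otimes> B r x) X = \<zero>"
    proof
      fix r assume r: "r \<in> T"
      have e': "finsum R (\<lambda>x. c x \<otimes> B r x) X = finsum R (\<lambda>x. c' x \<otimes> B r x) X"
        using fun_cong[OF e, of r] r unfolding \<Phi>_def by simp
      have "finsum R (\<lambda>x. (c x \<ominus> c' x) \<otimes> B r x) X
          = finsum R (\<lambda>x. c x \<otimes> B r x) X \<ominus> finsum R (\<lambda>x. c' x \<otimes> B r x) X"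
        using c c' cmB finX by (intro finsum_diff[symmetric]) (auto simp: cmat_def)
      also have "\<dots> = \<zero>" unfolding e' using c' cmB
        by (intro r_neg[unfolded minus_eq[symmetric]] finsum_closed) (auto simp: cmat_def minus_eq Pi_iff intro!: r_neg finsum_closed)
      finally show "finsum R (\<lambda>x. (c x \<ominus> c' x) \<otimes> B r x) X = \<zero>" .
    qed
    with ind d have z: "\<forall>x\<in>X. c x \<ominus> c' x = \<zero>" unfolding cols_indep_def by blast
    show "c = c'"
    proof (rule extensionalityI[of _ X])
      show "c \<in> extensional X" "c' \<in> extensional X" using c c' by (auto simp: PiE_def)
      fix x assume x: "x \<in> X"
      have "c x \<in> carrier R" "c' x \<in> carrier R" using c c' x by auto
      moreover have "c x \<ominus> c' x = \<zero>" using z x by blast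
      ultimately show "c x = c' x" by (rule minus_zero_eq)
    qed
  qed
  have sub: "\<Phi> ` (X \<rightarrow>\<^sub>E carrier R) \<subseteq> \<Psi> ` (Y \<rightarrow>\<^sub>E carrier R)"
  proof
    fix v assume "v \<in> \<Phi> ` (X \<rightarrow>\<^sub>E carrier R)"
    then obtain c where c: "c \<in> X \<rightarrow>\<^sub>E carrier R" and v: "v = \<Phi> c" by blast
    have "inspan R T A Y (\<lambda>r. finsum R (\<lambda>x. c x \<otimes> B r x) X)"
      using c by (intro inspan_lincomb[OF finX finY cmA cmB _ sp]) auto
    then obtain a where a: "a \<in> Y \<rightarrow> carrier R" and av: "\<forall>r\<in>T. finsum R (\<lambda>x. c x \<otimes> B r x) X = finsum R (\<lambda>y. a y \<otimes> A r y) Y"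
      unfolding inspan_def by blast
    have "\<Psi> (restrict a Y) = v"
    proof
      fix r show "\<Psi> (restrict a Y) r = v r"
      proof (cases "r \<in> T")
        case True
        have "finsum R (\<lambda>y. restrict a Y y \<otimes> A r y) Y = finsum R (\<lambda>y. a y \<otimes> A r y) Y"
          using a cmA by (intro finsum_cong') (auto simp: cmat_def)
        then show ?thesis using True av unfolding \<Psi>_def v \<Phi>_def by simp
      next
        case False then show ?thesis unfolding \<Psi>_def v \<Phi>_def by simp
      qed
    qed
    moreover have "restrict a Y \<in> Y \<rightarrow>\<^sub>E carrier R" using a by auto
    ultimately show "v \<in> \<Psi> ` (Y \<rightarrow>\<^sub>E carrier R)" by blast
  qed
  have "?q ^ card X = card (X \<rightarrow>\<^sub>E carrier R)" using finX by (simp add: card_PiE)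
  also have "\<dots> = card (\<Phi> ` (X \<rightarrow>\<^sub>E carrier R))" using inj by (simp add: card_image)
  also have "\<dots> \<le> card (\<Psi> ` (Y \<rightarrow>\<^sub>E carrier R))"
    using sub finY finK by (intro card_mono) (auto intro!: finite_PiE)
  also have "\<dots> \<le> card (Y \<rightarrow>\<^sub>E carrier R)" by (rule card_image_le) (use finY finK in \<open>auto intro!: finite_PiE\<close>)
  also have "\<dots> = ?q ^ card Y" using finY by (simp add: card_PiE)
  finally have le: "?q ^ card X \<le> ?q ^ card Y" .
  have "{\<zero>, \<one>} \<subseteq> carrier R" by auto
  then have "card {\<zero>, \<one>} \<le> ?q" using finK by (intro card_mono) auto
  then have "1 < ?q" by simp
  with le show ?thesis using power_le_imp_le_exp by blast
qed

end



context field begin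

lemma concat_sum_Plus:
  assumes "finite X" "finite Y" "cmat R A" "cmat R J" "f \<in> X \<rightarrow> carrier R" "g \<in> Y \<rightarrow> carrier R"
  shows "finsum R (\<lambda>z. (case z of Inl x \<Rightarrow> f x | Inr y \<Rightarrow> g y) \<otimes> mat_concat A J r z) (X <+> Y)
       = finsum R (\<lambda>x. f x \<otimes> A r x) X \<oplus> finsum R (\<lambda>y. g y \<otimes> J r y) Y"
proof -
  have "(\<lambda>z. (case z of Inl x \<Rightarrow> f x | Inr y \<Rightarrow> g y) \<otimes> mat_concat A J r z) \<in> (X <+> Y) \<rightarrow> carrier R"
    using assms by (auto simp: cmat_def mat_concat_def Pi_iff)
  from finsum_Plus[OF assms(1,2) this] show ?thesis by (simp add: mat_concat_def)
qed

lemma zero_ext_sum: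
  assumes "finite Y" "P \<subseteq> Y" "d \<in> P \<rightarrow> carrier R" "cmat R J"
  shows "finsum R (\<lambda>p. (if p \<in> P then d p else \<zero>) \<otimes> J r p) Y = finsum R (\<lambda>p. d p \<otimes> J r p) P"
  using assms by (intro add.finprod_mono_neutral_cong_left[symmetric]) (auto simp: cmat_def Pi_iff)

lemma Plus_decomp: "S \<subseteq> X <+> Y \<Longrightarrow> S = {x. Inl x \<in> S} <+> {y. Inr y \<in> S}"
  by (auto simp: Plus_def)

lemma t2_span:
  assumes finK: "finite (carrier R)" and finO1: "finite O1"
    and cm: "cmat R H21" "cmat R M1" "cmat R J"
    and rank21: "mat_rank R T O1 H21 = n1"
    and dec: "mat_rank R T ({..<n1} <+> {..<n2}) (mat_concat (mat_mult R H21 O1 M1) J) = n1 + n2"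
  shows "\<forall>e\<in>O1. inspan R T (mat_mult R H21 O1 M1) {..<n1} (\<lambda>r. H21 r e)"
proof
  fix e assume e: "e \<in> O1"
  define G where "G = mat_mult R H21 O1 M1"
  have cmG: "cmat R G" unfolding G_def by (rule cmat_mult[OF cm(1,2)])
  have indD: "cols_indep R T (mat_concat G J) ({..<n1} <+> {..<n2})"
    using dec unfolding G_def by (intro rank_full) (auto simp: card_Plus)
  have "cols_indep R T (mat_concat G J) ({..<n1} <+> ({}::nat set))"
    by (rule ind_subset[OF indD _ _ cmat_concat[OF cmG cm(3)]]) auto
  then have indG: "cols_indep R T G {..<n1}" using ind_Plus_l[OF _ cmG] by blast
  obtain Bb where Bb: "{} \<subseteq> Bb" "Bb \<subseteq> O1" "cols_indep R T H21 Bb" "\<forall>c\<in>O1. inspan R T H21 Bb (\<lambda>r. H21 r c)"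
    using basis_exists[OF finO1 _ ind_empty cm(1)] by blast
  have fBb: "finite Bb" using Bb finO1 finite_subset by blast
  have cBb: "card Bb \<le> n1" using rank_le[OF finO1 Bb(2,3)] rank21 by simp
  have Gsp: "inspan R T H21 Bb (\<lambda>r. G r i)" for i
  proof -
    have "inspan R T H21 Bb (\<lambda>r. finsum R (\<lambda>e'. M1 e' i \<otimes> H21 r e') O1)"
      using cm by (intro inspan_lincomb[OF finO1 fBb cm(1) cm(1) _ Bb(4)]) (auto simp: cmat_def)
    moreover have "finsum R (\<lambda>e'. M1 e' i \<otimes> H21 r e') O1 = G r i" for r
      unfolding G_def mat_mult_def using cm by (intro finsum_cong') (auto simp: cmat_def m_comm)
    ultimately show ?thesis by simp
  qed
  show "inspan R T (mat_mult R H21 O1 M1) {..<n1} (\<lambda>r. H21 r e)"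
  proof (rule ccontr)
    assume nsp: "\<not> inspan R T (mat_mult R H21 O1 M1) {..<n1} (\<lambda>r. H21 r e)"
    define Z where "Z = mat_concat G H21"
    have cmZ: "cmat R Z" unfolding Z_def using cmG cm(1) by (rule cmat_concat)
    have i0: "cols_indep R T Z ({..<n1} <+> {})" unfolding Z_def using indG ind_Plus_l[OF _ cmG] by blast
    have ins: "insert (Inr e) ({..<n1} <+> {}) = {..<n1} <+> {e}" by auto
    have indZ: "cols_indep R T Z ({..<n1} <+> {e})"
    proof (rule ccontr)
      assume "\<not> cols_indep R T Z ({..<n1} <+> {e})"
      then have "\<not> cols_indep R T Z (insert (Inr e) ({..<n1} <+> {}))" using ins by simp
      from ind_insert_span[OF _ i0 _ this cmZ]
      have "inspan R T Z ({..<n1} <+> {}) (\<lambda>r. Z r (Inr e))" by auto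
      then have "inspan R T G {..<n1} (\<lambda>r. H21 r e)" unfolding Z_def
        using inspan_Plus_l[OF _ cmG, of "{..<n1}" T H21] by (simp add: mat_concat_def)
      then show False using nsp unfolding G_def by simp
    qed
    have "\<forall>x\<in>{..<n1} <+> {e}. inspan R T H21 Bb (\<lambda>r. Z r x)"
      using Gsp Bb(4) e by (auto simp: Z_def mat_concat_def)
    then have "card ({..<n1} <+> {e}) \<le> card Bb"
      by (intro steinitz[OF finK _ fBb indZ _ cm(1) cmZ]) auto
    then show False using cBb by (simp add: card_Plus)
  qed
qed

lemma t2_decode:
  assumes finK: "finite (carrier R)" and finO1: "finite O1" and finI: "finite I"
    and cm: "cmat R H21" "cmat R M1" "cmat R J"
    and rank21: "mat_rank R T O1 H21 = n1"
    and dec: "mat_rank R T ({..<n1} <+> {..<n2}) (mat_concat (mat_mult R H21 O1 M1) J) = n1 + n2"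
    and P: "P \<subseteq> {..<n2}" and q: "q \<in> I \<rightarrow> O1"
    and a: "a \<in> I \<rightarrow> carrier R" and d: "d \<in> P \<rightarrow> carrier R"
    and z: "\<forall>r\<in>T. finsum R (\<lambda>i. a i \<otimes> H21 r (q i)) I \<oplus> finsum R (\<lambda>p. d p \<otimes> J r p) P = \<zero>"
  shows "\<forall>p\<in>P. d p = \<zero>"
proof -
  define G where "G = mat_mult R H21 O1 M1"
  have cmG: "cmat R G" unfolding G_def by (rule cmat_mult[OF cm(1,2)])
  have indD: "cols_indep R T (mat_concat G J) ({..<n1} <+> {..<n2})"
    using dec unfolding G_def by (intro rank_full) (auto simp: card_Plus)
  have sp: "\<forall>e\<in>O1. inspan R T G {..<n1} (\<lambda>r. H21 r e)"
    using t2_span[OF finK finO1 cm rank21 dec] unfolding G_def .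
  have cmq: "cmat R (\<lambda>r i. H21 r (q i))" using cm by (auto simp: cmat_def)
  have "inspan R T G {..<n1} (\<lambda>r. finsum R (\<lambda>i. a i \<otimes> H21 r (q i)) I)"
    using sp q by (intro inspan_lincomb[OF finI _ cmG cmq a]) auto
  then obtain \<alpha> where al: "\<alpha> \<in> {..<n1} \<rightarrow> carrier R"
    and av: "\<forall>r\<in>T. finsum R (\<lambda>i. a i \<otimes> H21 r (q i)) I = finsum R (\<lambda>j. \<alpha> j \<otimes> G r j) {..<n1}"
    unfolding inspan_def by blast
  define \<gamma> where "\<gamma> z = (case z of Inl j \<Rightarrow> \<alpha> j | Inr p \<Rightarrow> (if p \<in> P then d p else \<zero>))" for z
  have dg: "(\<lambda>p. if p \<in> P then d p else \<zero>) \<in> {..<n2} \<rightarrow> carrier R" using d by auto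
  have g: "\<gamma> \<in> ({..<n1} <+> {..<n2}) \<rightarrow> carrier R" using al d unfolding \<gamma>_def by (auto simp: Pi_iff)
  have "\<forall>r\<in>T. finsum R (\<lambda>z. \<gamma> z \<otimes> mat_concat G J r z) ({..<n1} <+> {..<n2}) = \<zero>"
  proof
    fix r assume r: "r \<in> T"
    have "finsum R (\<lambda>z. \<gamma> z \<otimes> mat_concat G J r z) ({..<n1} <+> {..<n2})
        = finsum R (\<lambda>j. \<alpha> j \<otimes> G r j) {..<n1} \<oplus> finsum R (\<lambda>p. (if p \<in> P then d p else \<zero>) \<otimes> J r p) {..<n2}"
      unfolding \<gamma>_def by (rule concat_sum_Plus) (use cmG cm al dg in auto)
    also have "\<dots> = finsum R (\<lambda>i. a i \<otimes> H21 r (q i)) I \<oplus> finsum R (\<lambda>p. d p \<otimes> J r p) P"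
      using av r zero_ext_sum[OF _ P d cm(3)] by simp
    finally show "finsum R (\<lambda>z. \<gamma> z \<otimes> mat_concat G J r z) ({..<n1} <+> {..<n2}) = \<zero>" using z r by simp
  qed
  with indD g have "\<forall>z\<in>{..<n1} <+> {..<n2}. \<gamma> z = \<zero>" unfolding cols_indep_def by blast
  then show ?thesis unfolding \<gamma>_def using P by force
qed

end



context field begin

lemma t1_choose:
  assumes finK: "finite (carrier R)" and finO1: "finite O1"
    and cmA: "cmat R A" and cmJ: "cmat R J"
    and rankA: "mat_rank R T O1 A = k11"
    and R1: "R1 \<le> k11" and R2: "R2 \<le> n2"
    and rho: "R1 + R2 \<le> mat_rank R T (O1 <+> {..<n2}) (mat_concat A J)"
  shows "\<exists>Q P. Q \<subseteq> O1 \<and> card Q = R1 \<and> P \<subseteq> {..<n2} \<and> card P = R2 \<and>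
     (\<forall>c d. c \<in> Q \<rightarrow> carrier R \<longrightarrow> d \<in> P \<rightarrow> carrier R \<longrightarrow>
        (\<forall>r\<in>T. finsum R (\<lambda>e. c e \<otimes> A r e) Q \<oplus> finsum R (\<lambda>p. d p \<otimes> J r p) P = \<zero>) \<longrightarrow>
        (\<forall>e\<in>Q. c e = \<zero>))"
proof -
  define D where "D = mat_concat A J"
  have cmD: "cmat R D" unfolding D_def by (rule cmat_concat[OF cmA cmJ])
  have finC: "finite (O1 <+> {..<n2})" using finO1 by simp
  obtain Q0 where Q0: "Q0 \<subseteq> O1" "cols_indep R T A Q0" "card Q0 = k11"
    using rank_ex[OF finO1] rankA by blast
  have fQ0: "finite Q0" using Q0 finO1 finite_subset by blast
  have Aspan: "inspan R T A Q0 (\<lambda>r. A r e)" if e: "e \<in> O1" for e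
  proof (cases "e \<in> Q0")
    case True show ?thesis by (rule inspan_col[OF True fQ0 cmA])
  next
    case False
    have "\<not> cols_indep R T A (insert e Q0)"
    proof
      assume "cols_indep R T A (insert e Q0)"
      moreover have "insert e Q0 \<subseteq> O1" using Q0 e by auto
      ultimately have "card (insert e Q0) \<le> k11" using rank_le[OF finO1, of "insert e Q0" T A] rankA by simp
      then show False using False fQ0 Q0 by simp
    qed
    then show ?thesis using ind_insert_span[OF fQ0 Q0(2) False _ cmA] by blast
  qed
  have i0: "cols_indep R T D (Q0 <+> {})" unfolding D_def using ind_Plus_l[OF fQ0 cmA] Q0 by blast
  obtain S where S: "Q0 <+> {} \<subseteq> S" "S \<subseteq> Q0 <+> {..<n2}" "cols_indep R T D S"
      "\<forall>c\<in>Q0 <+> {..<n2}. inspan R T D S (\<lambda>r. D r c)"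
    using basis_exists[OF _ _ i0 cmD, of "Q0 <+> {..<n2}"] fQ0 by auto
  define P0 where "P0 = {j. Inr j \<in> S}"
  have SP0: "S = Q0 <+> P0"
  proof -
    have "S = {x. Inl x \<in> S} <+> P0" unfolding P0_def using S(2) by (rule Plus_decomp)
    moreover have "{x. Inl x \<in> S} = Q0" using S(1,2) by auto
    ultimately show ?thesis by simp
  qed
  have P0sub: "P0 \<subseteq> {..<n2}" using S(2) unfolding P0_def by auto
  have fP0: "finite P0" using P0sub finite_subset by blast
  have fS: "finite S" using SP0 fQ0 fP0 by simp
  have allsp: "\<forall>c\<in>O1 <+> {..<n2}. inspan R T D S (\<lambda>r. D r c)"
  proof
    fix c assume c: "c \<in> O1 <+> {..<n2}"
    show "inspan R T D S (\<lambda>r. D r c)"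
    proof (cases c)
      case (Inl e)
      then have e: "e \<in> O1" using c by auto
      have "inspan R T D (Q0 <+> {}) (\<lambda>r. A r e)"
        unfolding D_def using inspan_Plus_l[OF fQ0 cmA] Aspan[OF e] by blast
      then have "inspan R T D S (\<lambda>r. A r e)" using inspan_mono[OF _ S(1) fS cmD] by blast
      then show ?thesis using Inl by (simp add: D_def mat_concat_def)
    next
      case (Inr j) then show ?thesis using S(4) c by auto
    qed
  qed
  obtain Sr where Sr: "Sr \<subseteq> O1 <+> {..<n2}" "cols_indep R T D Sr" "card Sr = mat_rank R T (O1 <+> {..<n2}) D"
    using rank_ex[OF finC] by blast
  have "card Sr \<le> card S"
    using Sr allsp finC finite_subset[OF Sr(1) finC] by (intro steinitz[OF finK _ fS Sr(2) _ cmD cmD]) auto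
  then have rhoS: "R1 + R2 \<le> k11 + card P0" using rho Sr SP0 Q0 fQ0 fP0 unfolding D_def by (simp add: card_Plus)
  obtain P where P: "P \<subseteq> {..<n2}" "card P = R2" "card (P \<inter> P0) = min R2 (card P0)"
  proof (cases "R2 \<le> card P0")
    case True
    then obtain P where "P \<subseteq> P0" "card P = R2" using obtain_subset_with_card_n by metis
    then show ?thesis using that[of P] P0sub True by (auto simp: Int_absorb2)
  next
    case False
    have "card ({..<n2} - P0) = n2 - card P0" using P0sub by (simp add: card_Diff_subset fP0)
    then have "R2 - card P0 \<le> card ({..<n2} - P0)" using R2 by simp
    then obtain W where W: "W \<subseteq> {..<n2} - P0" "card W = R2 - card P0" using obtain_subset_with_card_n by metis
    have fW: "finite W" using W(1) finite_subset by blast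
    have "card (P0 \<union> W) = card P0 + card W" using W fP0 fW by (intro card_Un_disjoint) auto
    moreover have "(P0 \<union> W) \<inter> P0 = P0" by auto
    ultimately show ?thesis using that[of "P0 \<union> W"] P0sub W False by auto
  qed
  have fP: "finite P" using P(1) finite_subset by blast
  have iPP0: "cols_indep R T J (P \<inter> P0)"
  proof -
    have "cols_indep R T D ({} <+> (P \<inter> P0))"
      by (rule ind_subset[OF S(3) _ fS cmD]) (auto simp: SP0)
    then show ?thesis unfolding D_def using ind_Plus_r[OF _ cmJ] fP by blast
  qed
  obtain B where B: "P \<inter> P0 \<subseteq> B" "B \<subseteq> P" "cols_indep R T J B" "\<forall>c\<in>P. inspan R T J B (\<lambda>r. J r c)"
    using basis_exists[OF fP _ iPP0 cmJ] by blast
  have fB: "finite B" using B(2) fP finite_subset by blast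
  have iB: "cols_indep R T D ({} <+> B)" unfolding D_def using ind_Plus_r[OF fB cmJ] B(3) by blast
  obtain S' where S': "{} <+> B \<subseteq> S'" "S' \<subseteq> Q0 <+> B" "cols_indep R T D S'"
      "\<forall>c\<in>Q0 <+> B. inspan R T D S' (\<lambda>r. D r c)"
    using basis_exists[OF _ _ iB cmD, of "Q0 <+> B"] fQ0 fB by auto
  define Q where "Q = {x. Inl x \<in> S'}"
  have SQ: "S' = Q <+> B"
  proof -
    have "S' = Q <+> {y. Inr y \<in> S'}" unfolding Q_def using S'(2) by (rule Plus_decomp)
    moreover have "{y. Inr y \<in> S'} = B" using S'(1,2) by auto
    ultimately show ?thesis by simp
  qed
  have QQ0: "Q \<subseteq> Q0" using S'(2) unfolding Q_def by auto
  have fQ: "finite Q" using QQ0 fQ0 finite_subset by blast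
  have fS': "finite S'" using SQ fQ fB by simp
  have iX: "cols_indep R T D (Q0 <+> (P \<inter> P0))"
    by (rule ind_subset[OF S(3) _ fS cmD]) (auto simp: SP0)
  have "card (Q0 <+> (P \<inter> P0)) \<le> card S'"
  proof (rule steinitz[OF finK _ fS' iX _ cmD cmD])
    show "finite (Q0 <+> (P \<inter> P0))" using fQ0 fP by simp
    show "\<forall>x\<in>Q0 <+> P \<inter> P0. inspan R T D S' (\<lambda>r. D r x)" using S'(4) B(1) by auto
  qed
  then have "k11 + min R2 (card P0) \<le> card Q + card B"
    using SQ fQ fB fQ0 fP Q0 P by (simp add: card_Plus)
  moreover have "card B \<le> R2" using B(2) fP P(2) card_mono by metis
  ultimately have cQ: "R1 \<le> card Q" using rhoS R1 by auto
  obtain Q' where Q': "Q' \<subseteq> Q" "card Q' = R1" using obtain_subset_with_card_n[OF cQ] by metis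
  have fQ': "finite Q'" using Q' fQ finite_subset by blast
  have dec: "\<forall>c d. c \<in> Q' \<rightarrow> carrier R \<longrightarrow> d \<in> P \<rightarrow> carrier R \<longrightarrow>
        (\<forall>r\<in>T. finsum R (\<lambda>e. c e \<otimes> A r e) Q' \<oplus> finsum R (\<lambda>p. d p \<otimes> J r p) P = \<zero>) \<longrightarrow>
        (\<forall>e\<in>Q'. c e = \<zero>)"
  proof (intro allI impI)
    fix c d assume c: "c \<in> Q' \<rightarrow> carrier R" and d: "d \<in> P \<rightarrow> carrier R"
      and z: "\<forall>r\<in>T. finsum R (\<lambda>e. c e \<otimes> A r e) Q' \<oplus> finsum R (\<lambda>p. d p \<otimes> J r p) P = \<zero>"
    have "inspan R T J B (\<lambda>r. finsum R (\<lambda>p. d p \<otimes> J r p) P)"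
      by (rule inspan_lincomb[OF fP fB cmJ cmJ d B(4)])
    then obtain \<beta> where be: "\<beta> \<in> B \<rightarrow> carrier R"
      and bv: "\<forall>r\<in>T. finsum R (\<lambda>p. d p \<otimes> J r p) P = finsum R (\<lambda>b. \<beta> b \<otimes> J r b) B"
      unfolding inspan_def by blast
    define \<gamma> where "\<gamma> z = (case z of Inl e \<Rightarrow> (if e \<in> Q' then c e else \<zero>) | Inr b \<Rightarrow> \<beta> b)" for z
    have cg: "(\<lambda>e. if e \<in> Q' then c e else \<zero>) \<in> Q \<rightarrow> carrier R" using c by auto
    have g: "\<gamma> \<in> S' \<rightarrow> carrier R" using c be unfolding \<gamma>_def SQ by (auto simp: Pi_iff)
    have "\<forall>r\<in>T. finsum R (\<lambda>z. \<gamma> z \<otimes> D r z) S' = \<zero>"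
    proof
      fix r assume r: "r \<in> T"
      have "finsum R (\<lambda>z. \<gamma> z \<otimes> D r z) S'
          = finsum R (\<lambda>e. (if e \<in> Q' then c e else \<zero>) \<otimes> A r e) Q \<oplus> finsum R (\<lambda>b. \<beta> b \<otimes> J r b) B"
        unfolding \<gamma>_def SQ D_def by (rule concat_sum_Plus) (use cmA cmJ cg be fQ fB in auto)
      also have "\<dots> = finsum R (\<lambda>e. c e \<otimes> A r e) Q' \<oplus> finsum R (\<lambda>p. d p \<otimes> J r p) P"
        using bv r zero_ext_sum[OF fQ Q'(1) c cmA] by simp
      finally show "finsum R (\<lambda>z. \<gamma> z \<otimes> D r z) S' = \<zero>" using z r by simp
    qed
    with S'(3) g have "\<forall>z\<in>S'. \<gamma> z = \<zero>" unfolding cols_indep_def by blast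
    then show "\<forall>e\<in>Q'. c e = \<zero>" unfolding \<gamma>_def SQ using Q'(1) by force
  qed
  show ?thesis
    apply (rule exI[of _ Q'], rule exI[of _ P])
    using Q' QQ0 Q0(1) P dec by auto
qed

end



context field begin

lemma sum_assoc2:
  assumes "finite Os" "finite I" "\<forall>e'. H e' \<in> carrier R" "\<forall>e' i. M e' i \<in> carrier R" "U \<in> I \<rightarrow> carrier R"
  shows "finsum R (\<lambda>e'. H e' \<otimes> finsum R (\<lambda>i. M e' i \<otimes> U i) I) Os
       = finsum R (\<lambda>i. U i \<otimes> finsum R (\<lambda>e'. H e' \<otimes> M e' i) Os) I"
proof -
  have "finsum R (\<lambda>e'. H e' \<otimes> finsum R (\<lambda>i. M e' i \<otimes> U i) I) Os
      = finsum R (\<lambda>e'. finsum R (\<lambda>i. H e' \<otimes> (M e' i \<otimes> U i)) I) Os"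
    using assms by (intro finsum_cong') (auto simp: Pi_iff intro!: finsum_rdistr finsum_closed)
  also have "\<dots> = finsum R (\<lambda>i. finsum R (\<lambda>e'. H e' \<otimes> (M e' i \<otimes> U i)) Os) I"
    using assms by (intro finsum_swap) (auto simp: Pi_iff)
  also have "\<dots> = finsum R (\<lambda>i. finsum R (\<lambda>e'. U i \<otimes> (H e' \<otimes> M e' i)) Os) I"
    using assms by (intro finsum_cong' refl) (auto simp: Pi_iff m_ac intro!: finsum_closed)
  also have "\<dots> = finsum R (\<lambda>i. U i \<otimes> finsum R (\<lambda>e'. H e' \<otimes> M e' i) Os) I"
    using assms by (intro finsum_cong' refl) (auto simp: Pi_iff intro!: finsum_rdistr[symmetric] finsum_closed)
  finally show ?thesis .
qed

lemma indicator_sum: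
  assumes "finite Os" "q \<in> Os" "\<forall>e'. H e' \<in> carrier R"
  shows "finsum R (\<lambda>e'. H e' \<otimes> (if e' = q then \<one> else \<zero>)) Os = H q"
proof -
  have "finsum R (\<lambda>e'. H e' \<otimes> (if e' = q then \<one> else \<zero>)) Os = finsum R (\<lambda>e'. if q = e' then H e' else \<zero>) Os"
    using assms by (intro finsum_cong') auto
  also have "\<dots> = H q" using assms by (intro finsum_singleton) auto
  finally show ?thesis .
qed

lemma eq_sub:
  assumes "a \<in> carrier R" "b \<in> carrier R" "a' \<in> carrier R" "b' \<in> carrier R" "a \<oplus> b = a' \<oplus> b'"
  shows "(a \<ominus> a') \<oplus> (b \<ominus> b') = \<zero>"
proof -
  have "(a \<ominus> a') \<oplus> (b \<ominus> b') = (a \<oplus> b) \<ominus> (a' \<oplus> b')"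
    using assms(1-4) by (simp add: minus_eq minus_add a_ac)
  also have "\<dots> = \<zero>" using assms by (simp add: minus_eq r_neg)
  finally show ?thesis .
qed

lemma recv:
  assumes fO1: "finite O1" and fO2: "finite O2" and t1: "\<forall>e'\<in>O1. tail e' = s1" and t2: "\<forall>e'\<in>O2. tail e' = s2"
    and s: "s1 \<noteq> s2" and q: "q \<in> {..<R1} \<rightarrow> O1"
    and Ha: "\<forall>e'. Ha e' \<in> carrier R" and Hb: "\<forall>e'. Hb e' \<in> carrier R" and M2: "\<forall>e' k. M2 e' k \<in> carrier R"
    and U1: "U1 \<in> {..<R1} \<rightarrow> carrier R" and U2: "U2 \<in> {..<R2} \<rightarrow> carrier R"
  shows "finsum R (\<lambda>e'. Ha e' \<otimes> src_symbols R tail s1 s2 R1 R2 (\<lambda>e i. if e = q i then \<one> else \<zero>) (\<lambda>e i. M2 e (p i)) U1 U2 e') O1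
       \<oplus> finsum R (\<lambda>e'. Hb e' \<otimes> src_symbols R tail s1 s2 R1 R2 (\<lambda>e i. if e = q i then \<one> else \<zero>) (\<lambda>e i. M2 e (p i)) U1 U2 e') O2
       = finsum R (\<lambda>i. U1 i \<otimes> Ha (q i)) {..<R1} \<oplus> finsum R (\<lambda>j. U2 j \<otimes> finsum R (\<lambda>e'. Hb e' \<otimes> M2 e' (p j)) O2) {..<R2}"
proof -
  have a: "finsum R (\<lambda>e'. Ha e' \<otimes> src_symbols R tail s1 s2 R1 R2 (\<lambda>e i. if e = q i then \<one> else \<zero>) (\<lambda>e i. M2 e (p i)) U1 U2 e') O1
      = finsum R (\<lambda>e'. Ha e' \<otimes> finsum R (\<lambda>i. (if e' = q i then \<one> else \<zero>) \<otimes> U1 i) {..<R1}) O1"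
    using t1 U1 by (intro finsum_cong') (auto simp: src_symbols_def Ha Pi_iff intro!: m_closed finsum_closed)
  also have "\<dots> = finsum R (\<lambda>i. U1 i \<otimes> finsum R (\<lambda>e'. Ha e' \<otimes> (if e' = q i then \<one> else \<zero>)) O1) {..<R1}"
    using fO1 Ha U1 by (intro sum_assoc2) auto
  also have "\<dots> = finsum R (\<lambda>i. U1 i \<otimes> Ha (q i)) {..<R1}"
    using q fO1 Ha U1 by (intro finsum_cong') (auto simp: indicator_sum Pi_iff)
  finally have a: "finsum R (\<lambda>e'. Ha e' \<otimes> src_symbols R tail s1 s2 R1 R2 (\<lambda>e i. if e = q i then \<one> else \<zero>) (\<lambda>e i. M2 e (p i)) U1 U2 e') O1
      = finsum R (\<lambda>i. U1 i \<otimes> Ha (q i)) {..<R1}" .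
  have "finsum R (\<lambda>e'. Hb e' \<otimes> src_symbols R tail s1 s2 R1 R2 (\<lambda>e i. if e = q i then \<one> else \<zero>) (\<lambda>e i. M2 e (p i)) U1 U2 e') O2
      = finsum R (\<lambda>e'. Hb e' \<otimes> finsum R (\<lambda>j. M2 e' (p j) \<otimes> U2 j) {..<R2}) O2"
    using t2 s U2 by (intro finsum_cong') (auto simp: src_symbols_def Hb M2 Pi_iff intro!: m_closed finsum_closed)
  also have "\<dots> = finsum R (\<lambda>j. U2 j \<otimes> finsum R (\<lambda>e'. Hb e' \<otimes> M2 e' (p j)) O2) {..<R2}"
    using fO2 Hb U2 M2 by (intro sum_assoc2) auto
  finally show ?thesis using a by simp
qed

lemma reindex_bij:
  assumes b: "bij_betw p I P" and f: "f \<in> I \<rightarrow> carrier R" and G: "cmat R G"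
  shows "finsum R (\<lambda>k. f (the_inv_into I p k) \<otimes> G r k) P = finsum R (\<lambda>i. f i \<otimes> G r (p i)) I"
proof -
  have inj: "inj_on p I" and P: "P = p ` I" using b by (auto simp: bij_betw_def)
  have c: "(\<lambda>k. f (the_inv_into I p k) \<otimes> G r k) \<in> p ` I \<rightarrow> carrier R"
    using f G inj by (auto simp: cmat_def the_inv_into_f_f Pi_iff)
  have "finsum R (\<lambda>k. f (the_inv_into I p k) \<otimes> G r k) (p ` I) = finsum R (\<lambda>i. f (the_inv_into I p (p i)) \<otimes> G r (p i)) I"
    by (rule finsum_reindex[OF c inj])
  also have "\<dots> = finsum R (\<lambda>i. f i \<otimes> G r (p i)) I"
    using inj f G by (intro finsum_cong') (auto simp: the_inv_into_f_f cmat_def Pi_iff)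
  finally show ?thesis using P by simp
qed

end




lemma transfer_achievable:
  fixes F :: "'a ring"
  assumes fF: "field F" and finF: "finite (carrier F)"
    and bc: "\<forall>e e'. beta e e' \<in> carrier F"
    and mc: "\<forall>e r. M1 e r \<in> carrier F" "\<forall>e r. M2 e r \<in> carrier F"
    and DF: "\<forall>U1 U2 U1' U2' x x'.
             U1 \<in> {..<R1} \<rightarrow> carrier F \<longrightarrow> U2 \<in> {..<R2} \<rightarrow> carrier F \<longrightarrow>
             U1' \<in> {..<R1} \<rightarrow> carrier F \<longrightarrow> U2' \<in> {..<R2} \<rightarrow> carrier F \<longrightarrow>
             net_flow F E tail head {s1, s2} beta (src_symbols F tail s1 s2 R1 R2 M1 M2 U1 U2) x \<longrightarrow>
             net_flow F E tail head {s1, s2} beta (src_symbols F tail s1 s2 R1 R2 M1 M2 U1' U2') x' \<longrightarrow>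
             ((\<forall>e\<in>In_edges E head t1. x e = x' e) \<longrightarrow> (\<forall>r<R1. U1 r = U1' r)) \<and>
             ((\<forall>e\<in>In_edges E head t2. x e = x' e) \<longrightarrow> (\<forall>r<R2. U2 r = U2' r))"
  shows "achievable E tail head s1 s2 t1 t2 R1 R2"
proof -
  interpret F: field F by (rule fF)
  obtain \<phi> :: "'a \<Rightarrow> nat" and n where phi: "\<phi> ` carrier F = {i. i < n}" "inj_on \<phi> (carrier F)"
    using finite_imp_inj_to_nat_seg[OF finF] by blast
  define \<psi> where "\<psi> b = (if b \<in> \<phi> ` carrier F then inv_into (carrier F) \<phi> b else \<zero>\<^bsub>F\<^esub>)" for b
  define K :: "nat ring" where "K = \<lparr>carrier = \<phi> ` carrier F, mult = (\<lambda>x y. \<phi> (\<psi> x \<otimes>\<^bsub>F\<^esub> \<psi> y)),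
      one = \<phi> \<one>\<^bsub>F\<^esub>, zero = \<phi> \<zero>\<^bsub>F\<^esub>, add = (\<lambda>x y. \<phi> (\<psi> x \<oplus>\<^bsub>F\<^esub> \<psi> y))\<rparr>"
  have psi_phi: "\<psi> (\<phi> a) = a" if "a \<in> carrier F" for a
    using that phi(2) unfolding \<psi>_def by (auto intro: inv_into_f_f)
  have phi_psi: "\<phi> (\<psi> b) = b" if "b \<in> carrier K" for b
    using that unfolding \<psi>_def K_def by (auto intro: f_inv_into_f)
  have psi_c: "\<psi> b \<in> carrier F" for b
    unfolding \<psi>_def by (auto intro: inv_into_into)
  have cK: "carrier K = \<phi> ` carrier F" by (simp add: K_def)
  have iso: "\<phi> \<in> ring_iso F K"
  proof (rule ring_iso_memI)
    show "\<phi> x \<in> carrier K" if "x \<in> carrier F" for x using that by (simp add: K_def)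
    show "\<phi> (x \<otimes>\<^bsub>F\<^esub> y) = \<phi> x \<otimes>\<^bsub>K\<^esub> \<phi> y" if "x \<in> carrier F" "y \<in> carrier F" for x y
      using that by (simp add: K_def psi_phi)
    show "\<phi> (x \<oplus>\<^bsub>F\<^esub> y) = \<phi> x \<oplus>\<^bsub>K\<^esub> \<phi> y" if "x \<in> carrier F" "y \<in> carrier F" for x y
      using that by (simp add: K_def psi_phi)
    show "\<phi> \<one>\<^bsub>F\<^esub> = \<one>\<^bsub>K\<^esub>" by (simp add: K_def)
    show "bij_betw \<phi> (carrier F) (carrier K)" using phi(2) by (simp add: K_def bij_betw_def)
  qed
  have "field (K\<lparr>zero := \<phi> \<zero>\<^bsub>F\<^esub>\<rparr>)" by (rule F.ring_iso_imp_img_field[OF iso])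
  moreover have "K\<lparr>zero := \<phi> \<zero>\<^bsub>F\<^esub>\<rparr> = K" by (simp add: K_def)
  ultimately have fK: "field K" by simp
  interpret K: field K by (rule fK)
  have mulK: "\<psi> (x \<otimes>\<^bsub>K\<^esub> y) = \<psi> x \<otimes>\<^bsub>F\<^esub> \<psi> y" for x y by (simp add: K_def psi_phi psi_c)
  have mulKc: "x \<otimes>\<^bsub>K\<^esub> y \<in> carrier K" for x y by (simp add: K_def psi_c)
  have hom: "ring_hom_cring K F \<psi>"
  proof (intro ring_hom_cring.intro ring_hom_cring_axioms.intro)
    show "cring K" "cring F" by (rule K.is_cring, rule F.is_cring)
    show "\<psi> \<in> ring_hom K F"
    proof (rule ring_hom_memI)
      show "\<psi> x \<in> carrier F" for x by (rule psi_c)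
      show "\<psi> (x \<otimes>\<^bsub>K\<^esub> y) = \<psi> x \<otimes>\<^bsub>F\<^esub> \<psi> y" for x y by (rule mulK)
      show "\<psi> (x \<oplus>\<^bsub>K\<^esub> y) = \<psi> x \<oplus>\<^bsub>F\<^esub> \<psi> y" for x y by (simp add: K_def psi_phi psi_c)
      show "\<psi> \<one>\<^bsub>K\<^esub> = \<one>\<^bsub>F\<^esub>" by (simp add: K_def psi_phi)
    qed
  qed
  have psisum: "\<psi> (finsum K f A) = finsum F (\<lambda>a. \<psi> (f a)) A" if "f \<in> A \<rightarrow> carrier K" for f A
    using ring_hom_cring.hom_finsum[OF hom that] by (simp add: comp_def)
  have psi0: "\<psi> \<zero>\<^bsub>K\<^esub> = \<zero>\<^bsub>F\<^esub>" by (simp add: K_def psi_phi)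
  define betaK where "betaK e e' = \<phi> (beta e e')" for e e'
  define M1K where "M1K e r = \<phi> (M1 e r)" for e r
  define M2K where "M2K e r = \<phi> (M2 e r)" for e r
  have trans_src: "\<psi> (src_symbols K tail s1 s2 R1 R2 M1K M2K U1 U2 e)
      = src_symbols F tail s1 s2 R1 R2 M1 M2 (\<lambda>r. \<psi> (U1 r)) (\<lambda>r. \<psi> (U2 r)) e" for U1 U2 e
  proof -
    have a: "\<psi> (finsum K (\<lambda>r. M1K e r \<otimes>\<^bsub>K\<^esub> U1 r) {..<R1}) = finsum F (\<lambda>r. M1 e r \<otimes>\<^bsub>F\<^esub> \<psi> (U1 r)) {..<R1}"
      using mulKc mc by (simp add: psisum mulK M1K_def psi_phi)
    have b: "\<psi> (finsum K (\<lambda>r. M2K e r \<otimes>\<^bsub>K\<^esub> U2 r) {..<R2}) = finsum F (\<lambda>r. M2 e r \<otimes>\<^bsub>F\<^esub> \<psi> (U2 r)) {..<R2}"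
      using mulKc mc by (simp add: psisum mulK M2K_def psi_phi)
    show ?thesis unfolding src_symbols_def using a b psi0 by simp
  qed
  have trans_flow: "net_flow F E tail head {s1, s2} beta
        (src_symbols F tail s1 s2 R1 R2 M1 M2 (\<lambda>r. \<psi> (U1 r)) (\<lambda>r. \<psi> (U2 r))) (\<lambda>e. \<psi> (x e))"
    if nf: "net_flow K E tail head {s1, s2} betaK (src_symbols K tail s1 s2 R1 R2 M1K M2K U1 U2) x" for U1 U2 x
    unfolding net_flow_def
  proof
    fix e assume e: "e \<in> E"
    have xe: "x e = (if tail e \<in> {s1, s2} then src_symbols K tail s1 s2 R1 R2 M1K M2K U1 U2 e
                   else finsum K (\<lambda>e'. betaK e' e \<otimes>\<^bsub>K\<^esub> x e') (In_edges E head (tail e)))"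
      using nf e unfolding net_flow_def by blast
    show "\<psi> (x e) = (if tail e \<in> {s1, s2} then src_symbols F tail s1 s2 R1 R2 M1 M2 (\<lambda>r. \<psi> (U1 r)) (\<lambda>r. \<psi> (U2 r)) e
                   else finsum F (\<lambda>e'. beta e' e \<otimes>\<^bsub>F\<^esub> \<psi> (x e')) (In_edges E head (tail e)))"
    proof (cases "tail e \<in> {s1, s2}")
      case True then show ?thesis using xe trans_src by simp
    next
      case False
      have "\<psi> (finsum K (\<lambda>e'. betaK e' e \<otimes>\<^bsub>K\<^esub> x e') (In_edges E head (tail e)))
          = finsum F (\<lambda>e'. beta e' e \<otimes>\<^bsub>F\<^esub> \<psi> (x e')) (In_edges E head (tail e))"
        using mulKc bc by (simp add: psisum mulK betaK_def psi_phi)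
      then show ?thesis using xe False by simp
    qed
  qed
  have psi_inj: "u = v" if "u \<in> carrier K" "v \<in> carrier K" "\<psi> u = \<psi> v" for u v
    using phi_psi that by metis
  have dec: "\<forall>U1 U2 U1' U2' x x'.
             U1 \<in> {..<R1} \<rightarrow> carrier K \<longrightarrow> U2 \<in> {..<R2} \<rightarrow> carrier K \<longrightarrow>
             U1' \<in> {..<R1} \<rightarrow> carrier K \<longrightarrow> U2' \<in> {..<R2} \<rightarrow> carrier K \<longrightarrow>
             net_flow K E tail head {s1, s2} betaK (src_symbols K tail s1 s2 R1 R2 M1K M2K U1 U2) x \<longrightarrow>
             net_flow K E tail head {s1, s2} betaK (src_symbols K tail s1 s2 R1 R2 M1K M2K U1' U2') x' \<longrightarrow>
             ((\<forall>e\<in>In_edges E head t1. x e = x' e) \<longrightarrow> (\<forall>r<R1. U1 r = U1' r)) \<and>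
             ((\<forall>e\<in>In_edges E head t2. x e = x' e) \<longrightarrow> (\<forall>r<R2. U2 r = U2' r))"
  proof (intro allI impI)
    fix U1 U2 U1' U2' x x'
    assume U1: "U1 \<in> {..<R1} \<rightarrow> carrier K" and U2: "U2 \<in> {..<R2} \<rightarrow> carrier K"
      and U1': "U1' \<in> {..<R1} \<rightarrow> carrier K" and U2': "U2' \<in> {..<R2} \<rightarrow> carrier K"
      and nf: "net_flow K E tail head {s1, s2} betaK (src_symbols K tail s1 s2 R1 R2 M1K M2K U1 U2) x"
      and nf': "net_flow K E tail head {s1, s2} betaK (src_symbols K tail s1 s2 R1 R2 M1K M2K U1' U2') x'"
    have D: "((\<forall>e\<in>In_edges E head t1. \<psi> (x e) = \<psi> (x' e)) \<longrightarrow> (\<forall>r<R1. \<psi> (U1 r) = \<psi> (U1' r))) \<and>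
             ((\<forall>e\<in>In_edges E head t2. \<psi> (x e) = \<psi> (x' e)) \<longrightarrow> (\<forall>r<R2. \<psi> (U2 r) = \<psi> (U2' r)))"
      using DF[rule_format, of "\<lambda>r. \<psi> (U1 r)" "\<lambda>r. \<psi> (U2 r)" "\<lambda>r. \<psi> (U1' r)" "\<lambda>r. \<psi> (U2' r)" "\<lambda>e. \<psi> (x e)" "\<lambda>e. \<psi> (x' e)"]
        trans_flow[OF nf] trans_flow[OF nf'] psi_c by (simp add: Pi_iff)
    show "((\<forall>e\<in>In_edges E head t1. x e = x' e) \<longrightarrow> (\<forall>r<R1. U1 r = U1' r)) \<and>
             ((\<forall>e\<in>In_edges E head t2. x e = x' e) \<longrightarrow> (\<forall>r<R2. U2 r = U2' r))"
      using D U1 U1' U2 U2' psi_inj by (auto simp: Pi_iff)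
  qed
  have cs: "\<forall>e e'. betaK e e' \<in> carrier K" "\<forall>e r. M1K e r \<in> carrier K" "\<forall>e r. M2K e r \<in> carrier K"
    using bc mc by (auto simp: betaK_def M1K_def M2K_def K_def)
  have "finite (carrier K)" using finF by (simp add: K_def)
  then show ?thesis unfolding achievable_def using fK cs dec by blast
qed





theorem theorem3:
  fixes V :: "'v set" and E :: "'e set" and tail head :: "'e \<Rightarrow> 'v" and s1 s2 t1 t2 :: 'v
    and F :: "'a ring" and beta H11 H12 H21 H22 :: "'e \<Rightarrow> 'e \<Rightarrow> 'a"
    and M1 M2 :: "'e \<Rightarrow> nat \<Rightarrow> 'a"
  defines "k1_1 \<equiv> min_cut E tail head {s1} {t1}"
      and "k1_2 \<equiv> min_cut E tail head {s1} {t2}"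
      and "k2_1 \<equiv> min_cut E tail head {s2} {t1}"
      and "k2_2 \<equiv> min_cut E tail head {s2} {t2}"
      and "k12_1 \<equiv> min_cut E tail head {s1, s2} {t1}"
      and "k12_2 \<equiv> min_cut E tail head {s1, s2} {t2}"
      and "k1_12 \<equiv> min_cut E tail head {s1} {t1, t2}"
      and "k2_12 \<equiv> min_cut E tail head {s2} {t1, t2}"
      and "R1s \<equiv> min_cut E tail head {s1} {t2}"
      and "R2s \<equiv> min (min_cut E tail head {s1, s2} {t1}) (min_cut E tail head {s1, s2} {t2})
                      - min_cut E tail head {s1} {t2}"
  assumes net: "two_unicast_net V E tail head s1 s2 t1 t2"
    and out_s1: "card (Out_edges E tail s1) = k1_12"
    and out_s2: "card (Out_edges E tail s2) = k2_12"
    and in_t1: "card (In_edges E head t1) = k12_1"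
    and in_t2: "card (In_edges E head t2) = k12_2"
    and cond1: "k1_2 + k2_1 \<ge> min k12_1 k12_2"
    and cond2: "k1_2 \<le> k1_1"
    and field_F: "field F" and finite_F: "finite (carrier F)"
    and beta_carrier: "\<forall>e e'. beta e e' \<in> carrier F"
    and H_carrier: "\<forall>e e'. H11 e e' \<in> carrier F \<and> H12 e e' \<in> carrier F \<and>
                            H21 e e' \<in> carrier F \<and> H22 e e' \<in> carrier F"
    and H_def: "\<forall>Y x. (\<forall>e. Y e \<in> carrier F) \<longrightarrow> net_flow F E tail head {s1, s2} beta Y x \<longrightarrow>
        (\<forall>e\<in>In_edges E head t1. x e =
            finsum F (\<lambda>e'. H11 e e' \<otimes>\<^bsub>F\<^esub> Y e') (Out_edges E tail s1) \<oplus>\<^bsub>F\<^esub>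
            finsum F (\<lambda>e'. H12 e e' \<otimes>\<^bsub>F\<^esub> Y e') (Out_edges E tail s2)) \<and>
        (\<forall>e\<in>In_edges E head t2. x e =
            finsum F (\<lambda>e'. H21 e e' \<otimes>\<^bsub>F\<^esub> Y e') (Out_edges E tail s1) \<oplus>\<^bsub>F\<^esub>
            finsum F (\<lambda>e'. H22 e e' \<otimes>\<^bsub>F\<^esub> Y e') (Out_edges E tail s2))"
    and rank_H11: "mat_rank F (In_edges E head t1) (Out_edges E tail s1) H11 = k1_1"
    and rank_H12: "mat_rank F (In_edges E head t1) (Out_edges E tail s2) H12 = k2_1"
    and rank_H21: "mat_rank F (In_edges E head t2) (Out_edges E tail s1) H21 = k1_2"
    and rank_H22: "mat_rank F (In_edges E head t2) (Out_edges E tail s2) H22 = k2_2"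
    and rank_H1: "mat_rank F (In_edges E head t1) (Out_edges E tail s1 <+> Out_edges E tail s2)
                    (mat_concat H11 H12) = k12_1"
    and rank_H2: "mat_rank F (In_edges E head t2) (Out_edges E tail s1 <+> Out_edges E tail s2)
                    (mat_concat H21 H22) = k12_2"
    and M_carrier: "\<forall>e r. M1 e r \<in> carrier F \<and> M2 e r \<in> carrier F"
    and rank_M1: "mat_rank F (Out_edges E tail s1) {..<R1s} M1 = R1s"
    and rank_M2: "mat_rank F (Out_edges E tail s2) {..<R2s} M2 = R2s"
    and dec_t1: "mat_rank F (In_edges E head t1) ({..<R1s} <+> {..<R2s})
                   (mat_concat (mat_mult F H11 (Out_edges E tail s1) M1)
                               (mat_mult F H12 (Out_edges E tail s2) M2)) = R1s + R2s"
    and dec_t2: "mat_rank F (In_edges E head t2) ({..<R1s} <+> {..<R2s})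
                   (mat_concat (mat_mult F H21 (Out_edges E tail s1) M1)
                               (mat_mult F H22 (Out_edges E tail s2) M2)) = R1s + R2s"
  shows "\<forall>R1 R2::nat. R1 \<le> k1_1 \<longrightarrow> R2 \<le> min k12_1 k12_2 - k1_2 \<longrightarrow>
           R1 + R2 \<le> mat_rank F (In_edges E head t1) (Out_edges E tail s1 <+> {..<R2s})
                       (mat_concat H11 (mat_mult F H12 (Out_edges E tail s2) M2)) \<longrightarrow>
           achievable E tail head s1 s2 t1 t2 R1 R2"
proof (intro allI impI)
  fix R1 R2 :: nat
  assume hR1: "R1 \<le> k1_1" and hR2: "R2 \<le> min k12_1 k12_2 - k1_2"
    and hrho: "R1 + R2 \<le> mat_rank F (In_edges E head t1) (Out_edges E tail s1 <+> {..<R2s})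
                       (mat_concat H11 (mat_mult F H12 (Out_edges E tail s2) M2))"
  interpret F: field F by (rule field_F)
  define O1 where "O1 = Out_edges E tail s1"
  define O2 where "O2 = Out_edges E tail s2"
  define T1 where "T1 = In_edges E head t1"
  define T2 where "T2 = In_edges E head t2"
  have fE: "finite E" and s12: "s1 \<noteq> s2" using net unfolding two_unicast_net_def by auto
  have fO1: "finite O1" and fO2: "finite O2" using fE unfolding O1_def O2_def Out_edges_def by auto
  have tO1: "\<forall>e'\<in>O1. tail e' = s1" and tO2: "\<forall>e'\<in>O2. tail e' = s2" unfolding O1_def O2_def Out_edges_def by auto
  have cm: "cmat F H11" "cmat F H12" "cmat F H21" "cmat F H22" "cmat F M1" "cmat F M2"
    using H_carrier M_carrier by (auto simp: cmat_def)
  define J1 where "J1 = mat_mult F H12 O2 M2"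
  define J2 where "J2 = mat_mult F H22 O2 M2"
  have cmJ1: "cmat F J1" unfolding J1_def by (rule F.cmat_mult[OF cm(2,6)])
  have cmJ2: "cmat F J2" unfolding J2_def by (rule F.cmat_mult[OF cm(4,6)])
  have hR2': "R2 \<le> R2s" using hR2 unfolding R2s_def k12_1_def k12_2_def k1_2_def .
  have rH11: "mat_rank F T1 O1 H11 = k1_1" using rank_H11 unfolding T1_def O1_def .
  have rH21: "mat_rank F T2 O1 H21 = R1s" using rank_H21 unfolding T2_def O1_def R1s_def k1_2_def .
  have hrho': "R1 + R2 \<le> mat_rank F T1 (O1 <+> {..<R2s}) (mat_concat H11 J1)"
    using hrho unfolding T1_def O1_def J1_def O2_def .
  have dec2: "mat_rank F T2 ({..<R1s} <+> {..<R2s}) (mat_concat (mat_mult F H21 O1 M1) J2) = R1s + R2s"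
    using dec_t2 unfolding T2_def O1_def J2_def O2_def .
  obtain Q P where QP: "Q \<subseteq> O1" "card Q = R1" "P \<subseteq> {..<R2s}" "card P = R2"
    and decQ: "\<forall>c d. c \<in> Q \<rightarrow> carrier F \<longrightarrow> d \<in> P \<rightarrow> carrier F \<longrightarrow>
        (\<forall>r\<in>T1. finsum F (\<lambda>e. c e \<otimes>\<^bsub>F\<^esub> H11 r e) Q \<oplus>\<^bsub>F\<^esub> finsum F (\<lambda>p. d p \<otimes>\<^bsub>F\<^esub> J1 r p) P = \<zero>\<^bsub>F\<^esub>) \<longrightarrow>
        (\<forall>e\<in>Q. c e = \<zero>\<^bsub>F\<^esub>)"
    using F.t1_choose[OF finite_F fO1 cm(1) cmJ1 rH11 hR1 hR2' hrho'] by blast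
  have fQ: "finite Q" using QP(1) fO1 finite_subset by blast
  have fP: "finite P" using QP(3) finite_subset by blast
  obtain q where q: "bij_betw q {..<R1} Q"
    using ex_bij_betw_nat_finite[OF fQ] QP(2) by (auto simp: atLeast0LessThan)
  obtain p where p: "bij_betw p {..<R2} P"
    using ex_bij_betw_nat_finite[OF fP] QP(4) by (auto simp: atLeast0LessThan)
  have qO1: "q \<in> {..<R1} \<rightarrow> O1" using q QP(1) by (auto simp: bij_betw_def)
  have pP: "p \<in> {..<R2} \<rightarrow> P" using p by (auto simp: bij_betw_def)
  define M1' where "M1' = (\<lambda>e i. if e = q i then \<one>\<^bsub>F\<^esub> else \<zero>\<^bsub>F\<^esub>)"
  define M2' where "M2' = (\<lambda>e i. M2 e (p i))"
  have M1'c: "\<forall>e r. M1' e r \<in> carrier F" unfolding M1'_def by auto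
  have M2'c: "\<forall>e r. M2' e r \<in> carrier F" unfolding M2'_def using M_carrier by auto
  have rcv: "(\<forall>e\<in>T1. x e = finsum F (\<lambda>i. U1 i \<otimes>\<^bsub>F\<^esub> H11 e (q i)) {..<R1} \<oplus>\<^bsub>F\<^esub> finsum F (\<lambda>j. U2 j \<otimes>\<^bsub>F\<^esub> J1 e (p j)) {..<R2}) \<and>
             (\<forall>e\<in>T2. x e = finsum F (\<lambda>i. U1 i \<otimes>\<^bsub>F\<^esub> H21 e (q i)) {..<R1} \<oplus>\<^bsub>F\<^esub> finsum F (\<lambda>j. U2 j \<otimes>\<^bsub>F\<^esub> J2 e (p j)) {..<R2})"
    if U1: "U1 \<in> {..<R1} \<rightarrow> carrier F" and U2: "U2 \<in> {..<R2} \<rightarrow> carrier F"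
      and nf: "net_flow F E tail head {s1, s2} beta (src_symbols F tail s1 s2 R1 R2 M1' M2' U1 U2) x" for U1 U2 x
  proof -
    have Yc: "\<forall>e. src_symbols F tail s1 s2 R1 R2 M1' M2' U1 U2 e \<in> carrier F"
      using U1 U2 M1'c M2'c unfolding src_symbols_def by (auto intro!: F.finsum_closed simp: Pi_iff)
    note H = mp[OF mp[OF H_def[THEN spec, THEN spec] Yc] nf]
    have "\<forall>e\<in>T1. x e = finsum F (\<lambda>i. U1 i \<otimes>\<^bsub>F\<^esub> H11 e (q i)) {..<R1} \<oplus>\<^bsub>F\<^esub> finsum F (\<lambda>j. U2 j \<otimes>\<^bsub>F\<^esub> J1 e (p j)) {..<R2}"
    proof
      fix e assume e: "e \<in> T1"
      have "x e = finsum F (\<lambda>e'. H11 e e' \<otimes>\<^bsub>F\<^esub> src_symbols F tail s1 s2 R1 R2 M1' M2' U1 U2 e') O1 \<oplus>\<^bsub>F\<^esub>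
            finsum F (\<lambda>e'. H12 e e' \<otimes>\<^bsub>F\<^esub> src_symbols F tail s1 s2 R1 R2 M1' M2' U1 U2 e') O2"
        using H e unfolding T1_def O1_def O2_def by blast
      also have "\<dots> = finsum F (\<lambda>i. U1 i \<otimes>\<^bsub>F\<^esub> H11 e (q i)) {..<R1} \<oplus>\<^bsub>F\<^esub>
          finsum F (\<lambda>j. U2 j \<otimes>\<^bsub>F\<^esub> finsum F (\<lambda>e'. H12 e e' \<otimes>\<^bsub>F\<^esub> M2 e' (p j)) O2) {..<R2}"
        unfolding M1'_def M2'_def
        by (rule F.recv[OF fO1 fO2 tO1 tO2 s12 qO1 _ _ _ U1 U2]) (use H_carrier M_carrier in auto)
      finally show "x e = finsum F (\<lambda>i. U1 i \<otimes>\<^bsub>F\<^esub> H11 e (q i)) {..<R1} \<oplus>\<^bsub>F\<^esub> finsum F (\<lambda>j. U2 j \<otimes>\<^bsub>F\<^esub> J1 e (p j)) {..<R2}"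
        unfolding J1_def mat_mult_def .
    qed
    moreover have "\<forall>e\<in>T2. x e = finsum F (\<lambda>i. U1 i \<otimes>\<^bsub>F\<^esub> H21 e (q i)) {..<R1} \<oplus>\<^bsub>F\<^esub> finsum F (\<lambda>j. U2 j \<otimes>\<^bsub>F\<^esub> J2 e (p j)) {..<R2}"
    proof
      fix e assume e: "e \<in> T2"
      have "x e = finsum F (\<lambda>e'. H21 e e' \<otimes>\<^bsub>F\<^esub> src_symbols F tail s1 s2 R1 R2 M1' M2' U1 U2 e') O1 \<oplus>\<^bsub>F\<^esub>
            finsum F (\<lambda>e'. H22 e e' \<otimes>\<^bsub>F\<^esub> src_symbols F tail s1 s2 R1 R2 M1' M2' U1 U2 e') O2"
        using H e unfolding T2_def O1_def O2_def by blast
      also have "\<dots> = finsum F (\<lambda>i. U1 i \<otimes>\<^bsub>F\<^esub> H21 e (q i)) {..<R1} \<oplus>\<^bsub>F\<^esub>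
          finsum F (\<lambda>j. U2 j \<otimes>\<^bsub>F\<^esub> finsum F (\<lambda>e'. H22 e e' \<otimes>\<^bsub>F\<^esub> M2 e' (p j)) O2) {..<R2}"
        unfolding M1'_def M2'_def
        by (rule F.recv[OF fO1 fO2 tO1 tO2 s12 qO1 _ _ _ U1 U2]) (use H_carrier M_carrier in auto)
      finally show "x e = finsum F (\<lambda>i. U1 i \<otimes>\<^bsub>F\<^esub> H21 e (q i)) {..<R1} \<oplus>\<^bsub>F\<^esub> finsum F (\<lambda>j. U2 j \<otimes>\<^bsub>F\<^esub> J2 e (p j)) {..<R2}"
        unfolding J2_def mat_mult_def .
    qed
    ultimately show ?thesis by blast
  qed
  have qinj: "inj_on q {..<R1}" using q by (auto simp: bij_betw_def)
  have pinj: "inj_on p {..<R2}" using p by (auto simp: bij_betw_def)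
  have DF: "\<forall>U1 U2 U1' U2' x x'.
             U1 \<in> {..<R1} \<rightarrow> carrier F \<longrightarrow> U2 \<in> {..<R2} \<rightarrow> carrier F \<longrightarrow>
             U1' \<in> {..<R1} \<rightarrow> carrier F \<longrightarrow> U2' \<in> {..<R2} \<rightarrow> carrier F \<longrightarrow>
             net_flow F E tail head {s1, s2} beta (src_symbols F tail s1 s2 R1 R2 M1' M2' U1 U2) x \<longrightarrow>
             net_flow F E tail head {s1, s2} beta (src_symbols F tail s1 s2 R1 R2 M1' M2' U1' U2') x' \<longrightarrow>
             ((\<forall>e\<in>In_edges E head t1. x e = x' e) \<longrightarrow> (\<forall>r<R1. U1 r = U1' r)) \<and>
             ((\<forall>e\<in>In_edges E head t2. x e = x' e) \<longrightarrow> (\<forall>r<R2. U2 r = U2' r))"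
  proof (intro allI impI)
    fix U1 U2 U1' U2' x x'
    assume U1: "U1 \<in> {..<R1} \<rightarrow> carrier F" and U2: "U2 \<in> {..<R2} \<rightarrow> carrier F"
      and U1': "U1' \<in> {..<R1} \<rightarrow> carrier F" and U2': "U2' \<in> {..<R2} \<rightarrow> carrier F"
      and nf: "net_flow F E tail head {s1, s2} beta (src_symbols F tail s1 s2 R1 R2 M1' M2' U1 U2) x"
      and nf': "net_flow F E tail head {s1, s2} beta (src_symbols F tail s1 s2 R1 R2 M1' M2' U1' U2') x'"
    note r = rcv[OF U1 U2 nf] and r' = rcv[OF U1' U2' nf']
    define d1 where "d1 i = U1 i \<ominus>\<^bsub>F\<^esub> U1' i" for i
    define d2 where "d2 j = U2 j \<ominus>\<^bsub>F\<^esub> U2' j" for j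
    have d1c: "d1 \<in> {..<R1} \<rightarrow> carrier F" using U1 U1' unfolding d1_def by auto
    have d2c: "d2 \<in> {..<R2} \<rightarrow> carrier F" using U2 U2' unfolding d2_def by auto
    have cmq1: "cmat F (\<lambda>r i. H11 r (q i))" "cmat F (\<lambda>r i. H21 r (q i))"
      using cm by (auto simp: cmat_def)
    have gen: "finsum F (\<lambda>i. d1 i \<otimes>\<^bsub>F\<^esub> A r (q i)) {..<R1} \<oplus>\<^bsub>F\<^esub> finsum F (\<lambda>j. d2 j \<otimes>\<^bsub>F\<^esub> J r (p j)) {..<R2} = \<zero>\<^bsub>F\<^esub>"
      if eq: "finsum F (\<lambda>i. U1 i \<otimes>\<^bsub>F\<^esub> A r (q i)) {..<R1} \<oplus>\<^bsub>F\<^esub> finsum F (\<lambda>j. U2 j \<otimes>\<^bsub>F\<^esub> J r (p j)) {..<R2}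
            = finsum F (\<lambda>i. U1' i \<otimes>\<^bsub>F\<^esub> A r (q i)) {..<R1} \<oplus>\<^bsub>F\<^esub> finsum F (\<lambda>j. U2' j \<otimes>\<^bsub>F\<^esub> J r (p j)) {..<R2}"
        and cA: "cmat F A" and cJ: "cmat F J" for A J r
    proof -
      have cA': "(\<lambda>i. A r (q i)) \<in> {..<R1} \<rightarrow> carrier F" and cJ': "(\<lambda>j. J r (p j)) \<in> {..<R2} \<rightarrow> carrier F"
        using cA cJ by (auto simp: cmat_def)
      have "(finsum F (\<lambda>i. U1 i \<otimes>\<^bsub>F\<^esub> A r (q i)) {..<R1} \<ominus>\<^bsub>F\<^esub> finsum F (\<lambda>i. U1' i \<otimes>\<^bsub>F\<^esub> A r (q i)) {..<R1})
          \<oplus>\<^bsub>F\<^esub> (finsum F (\<lambda>j. U2 j \<otimes>\<^bsub>F\<^esub> J r (p j)) {..<R2} \<ominus>\<^bsub>F\<^esub> finsum F (\<lambda>j. U2' j \<otimes>\<^bsub>F\<^esub> J r (p j)) {..<R2}) = \<zero>\<^bsub>F\<^esub>"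
        using eq U1 U1' U2 U2' cA' cJ' by (intro F.eq_sub) (auto intro!: F.finsum_closed simp: Pi_iff)
      then show ?thesis unfolding d1_def d2_def
        using F.finsum_diff[OF _ U1 U1' cA'] F.finsum_diff[OF _ U2 U2' cJ'] by simp
    qed
    have D1: "(\<forall>e\<in>In_edges E head t1. x e = x' e) \<longrightarrow> (\<forall>r<R1. U1 r = U1' r)"
    proof (intro impI allI)
      fix i assume eq: "\<forall>e\<in>In_edges E head t1. x e = x' e" and i: "i < R1"
      define c where "c e = d1 (the_inv_into {..<R1} q e)" for e
      define d where "d k = d2 (the_inv_into {..<R2} p k)" for k
      have cc: "c \<in> Q \<rightarrow> carrier F" unfolding c_def using d1c q
        by (auto simp: bij_betw_def intro!: the_inv_into_into[of q "{..<R1}" _ "{..<R1}", THEN funcset_mem[OF d1c]])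
      have dc: "d \<in> P \<rightarrow> carrier F" unfolding d_def using d2c p
        by (auto simp: bij_betw_def intro!: the_inv_into_into[of p "{..<R2}" _ "{..<R2}", THEN funcset_mem[OF d2c]])
      have "\<forall>r\<in>T1. finsum F (\<lambda>e. c e \<otimes>\<^bsub>F\<^esub> H11 r e) Q \<oplus>\<^bsub>F\<^esub> finsum F (\<lambda>k. d k \<otimes>\<^bsub>F\<^esub> J1 r k) P = \<zero>\<^bsub>F\<^esub>"
      proof
        fix r assume rT: "r \<in> T1"
        have "finsum F (\<lambda>e. c e \<otimes>\<^bsub>F\<^esub> H11 r e) Q = finsum F (\<lambda>i. d1 i \<otimes>\<^bsub>F\<^esub> H11 r (q i)) {..<R1}"
          unfolding c_def by (rule F.reindex_bij[OF q d1c cm(1)])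
        moreover have "finsum F (\<lambda>k. d k \<otimes>\<^bsub>F\<^esub> J1 r k) P = finsum F (\<lambda>j. d2 j \<otimes>\<^bsub>F\<^esub> J1 r (p j)) {..<R2}"
          unfolding d_def by (rule F.reindex_bij[OF p d2c cmJ1])
        moreover have "finsum F (\<lambda>i. d1 i \<otimes>\<^bsub>F\<^esub> H11 r (q i)) {..<R1} \<oplus>\<^bsub>F\<^esub> finsum F (\<lambda>j. d2 j \<otimes>\<^bsub>F\<^esub> J1 r (p j)) {..<R2} = \<zero>\<^bsub>F\<^esub>"
          using r r' eq rT unfolding T1_def by (intro gen[OF _ cm(1) cmJ1]) auto
        ultimately show "finsum F (\<lambda>e. c e \<otimes>\<^bsub>F\<^esub> H11 r e) Q \<oplus>\<^bsub>F\<^esub> finsum F (\<lambda>k. d k \<otimes>\<^bsub>F\<^esub> J1 r k) P = \<zero>\<^bsub>F\<^esub>" by simp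
      qed
      with decQ cc dc have z: "\<forall>e\<in>Q. c e = \<zero>\<^bsub>F\<^esub>" by blast
      have "q i \<in> Q" using q i by (auto simp: bij_betw_def)
      then have "d1 i = \<zero>\<^bsub>F\<^esub>" using z i qinj unfolding c_def by (auto simp: the_inv_into_f_f)
      then show "U1 i = U1' i" unfolding d1_def using U1 U1' i F.minus_zero_eq by auto
    qed
    have D2: "(\<forall>e\<in>In_edges E head t2. x e = x' e) \<longrightarrow> (\<forall>r<R2. U2 r = U2' r)"
    proof (intro impI allI)
      fix j assume eq: "\<forall>e\<in>In_edges E head t2. x e = x' e" and j: "j < R2"
      define d where "d k = d2 (the_inv_into {..<R2} p k)" for k
      have dc: "d \<in> P \<rightarrow> carrier F" unfolding d_def using d2c p
        by (auto simp: bij_betw_def intro!: the_inv_into_into[of p "{..<R2}" _ "{..<R2}", THEN funcset_mem[OF d2c]])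
      have "\<forall>r\<in>T2. finsum F (\<lambda>i. d1 i \<otimes>\<^bsub>F\<^esub> H21 r (q i)) {..<R1} \<oplus>\<^bsub>F\<^esub> finsum F (\<lambda>k. d k \<otimes>\<^bsub>F\<^esub> J2 r k) P = \<zero>\<^bsub>F\<^esub>"
      proof
        fix r assume rT: "r \<in> T2"
        have "finsum F (\<lambda>k. d k \<otimes>\<^bsub>F\<^esub> J2 r k) P = finsum F (\<lambda>j. d2 j \<otimes>\<^bsub>F\<^esub> J2 r (p j)) {..<R2}"
          unfolding d_def by (rule F.reindex_bij[OF p d2c cmJ2])
        moreover have "finsum F (\<lambda>i. d1 i \<otimes>\<^bsub>F\<^esub> H21 r (q i)) {..<R1} \<oplus>\<^bsub>F\<^esub> finsum F (\<lambda>j. d2 j \<otimes>\<^bsub>F\<^esub> J2 r (p j)) {..<R2} = \<zero>\<^bsub>F\<^esub>"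
          using r r' eq rT unfolding T2_def by (intro gen[OF _ cm(3) cmJ2]) auto
        ultimately show "finsum F (\<lambda>i. d1 i \<otimes>\<^bsub>F\<^esub> H21 r (q i)) {..<R1} \<oplus>\<^bsub>F\<^esub> finsum F (\<lambda>k. d k \<otimes>\<^bsub>F\<^esub> J2 r k) P = \<zero>\<^bsub>F\<^esub>" by simp
      qed
      then have z: "\<forall>k\<in>P. d k = \<zero>\<^bsub>F\<^esub>"
        by (intro F.t2_decode[OF finite_F fO1 _ cm(3) cm(5) cmJ2 rH21 dec2 QP(3) qO1 d1c dc]) auto
      have "p j \<in> P" using p j by (auto simp: bij_betw_def)
      then have "d2 j = \<zero>\<^bsub>F\<^esub>" using z j pinj unfolding d_def by (auto simp: the_inv_into_f_f)
      then show "U2 j = U2' j" unfolding d2_def using U2 U2' j F.minus_zero_eq by auto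
    qed
    from D1 D2 show "((\<forall>e\<in>In_edges E head t1. x e = x' e) \<longrightarrow> (\<forall>r<R1. U1 r = U1' r)) \<and>
             ((\<forall>e\<in>In_edges E head t2. x e = x' e) \<longrightarrow> (\<forall>r<R2. U2 r = U2' r))" by blast
  qed
  show "achievable E tail head s1 s2 t1 t2 R1 R2"
    by (rule transfer_achievable[OF field_F finite_F beta_carrier M1'c M2'c DF])
qed



end
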